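(* Let $d\ge 1$, $n\ge 1$ and $r_1,\dots,r_n\ge 0$ be integers with $3d-1=n+\sum_{k=1}^n r_k$. Let $C'=(\Gamma,x_1,\dots,x_n,h)\in\mathcal M^{\mathrm{lab}}_{0,n}(\mathbb R^2,d)$ be a curve lying in the relative interior of a maximal cell of the cycle $\prod_{k=1}^n\psi_k^{r_k}\cdot\mathcal M^{\mathrm{lab}}_{0,n}(\mathbb R^2,d)$, such that each vertex of $\Gamma$ is adjacent to at most one marked end, the vertex adjacent to $x_k$ has valence $r_k+3$, and every vertex not adjacent to a marked end is $3$-valent. Assume $\Gamma$ has no string. Then $\Gamma$ has exactly $2n-2$ bounded edges, and $$|\det{}_{C'}(\mathrm{ev})| \;=\;\prod_{V}\mathrm{mult}(V),$$ the product taken over all ($3$-valent) vertices $V$ of $\Gamma$ not adjacent to any marked end. Equivalently, if $C$ denotes the curve obtained from $C'$ by forgetting the labels of the non-contracted ends, then $\nu_C\,|\det_{C'}(\mathrm{ev})|=\mathrm{mult}(C)$.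
   Context: Tropical setting. A labelled parametrized rational tropical curve of degree $d$ in $\mathbb R^2$ with $n$ marked ends is a tuple $(\Gamma,x_1,\dots,x_n,h)$ where $\Gamma$ is a metric tree (bounded edges have positive real lengths, unbounded edges are called ends, no vertices of valence $\le 2$), $x_1,\dots,x_n$ are distinct ends (the marked ends), and $h:\Gamma\to\mathbb R^2$ is continuous and affine on each edge: on an edge $e$ parametrized by arc length from an adjacent vertex $V$, $h$ moves with velocity an integer vector $v(e,V)\in\mathbb Z^2$ (the direction vector; its lattice length is the weight of $e$). The marked ends are contracted ($v=0$); the remaining $3d$ ends are labelled and have direction vectors $(-1,0)$, $(0,-1)$, $(1,1)$, exactly $d$ of each; at every vertex $V$ the balancing condition $\sum_{e\ni V}v(e,V)=0$ holds. $\mathcal M^{\mathrm{lab}}_{0,n}(\mathbb R^2,d)$ is the tropical moduli space of such curves (a polyhedral fan of dimension $3d-1+n$), and $\mathcal M_{0,n}(\mathbb R^2,d)$ is the analogous space where the non-contracted ends carry no labels. The evaluation map is $\mathrm{ev}=(\mathrm{ev}_1,\dots,\mathrm{ev}_n):\mathcal M^{\mathrm{lab}}_{0,n}(\mathbb R^2,d)\to\mathbb R^{2n}$, $\mathrm{ev}_k(C)=h(x_k)$. $\psi_k$ denotes the tropical Psi-class at the $k$-th marked end, and $\prod_k\psi_k^{r_k}\cdot\mathcal M^{\mathrm{lab}}_{0,n}(\mathbb R^2,d)$ the tropical intersection product, a tropical cycle of dimension $3d-1+n-\sum_k r_k$. Coordinates and determinant. On a cell of curves of fixed combinatorial type, choose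 a root vertex $V_0$; coordinates are $h(V_0)\in\mathbb R^2$ and the lengths $\ell(e)$ of the bounded edges. Then $\mathrm{ev}_k=h(V_0)+\sum_{e}\ell(e)\,v(e)$, summing over bounded edges on the path from $V_0$ to $x_k$ with $v(e)$ the direction vector pointing away from $V_0$; so $\mathrm{ev}$ is linear on the cell. When the number of coordinates equals $2n$, $\det_{C'}(\mathrm{ev})$ denotes the determinant of this linear map (its absolute value is independent of choices). A string of $\Gamma$ is a subgraph homeomorphic to $\mathbb R$ (a path from one non-contracted end to another) not meeting the closure of any marked end. The multiplicity of a $3$-valent vertex $V$ with two adjacent edges of direction vectors $v_1,v_2$ (pointing away from $V$) is $\mathrm{mult}(V)=|\det(v_1,v_2)|$. For an unlabelled curve $C$, let $V_1,\dots,V_t$ be its vertices and $b_{ij}$ the number of non-contracted ends of direction $-e_j$ adjacent to $V_i$ ($j=0,1,2$, with $e_0=-e_1-e_2$, $e_1,e_2$ the standard basis); set $\nu_C=\prod_{i}\prod_{j}\frac{1}{b_{ij}!}$. Define $\mathrm{mult}(C)$ as $\nu_C$ times the product of $\mathrm{mult}(V)$ over all $3$-valent vertices $V$ not adjacent to a marked end. *)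

theory Defs
  imports "HOL-Library.Product_Plus" "Jordan_Normal_Form.Determinant"
begin

text \<open>Combinatorial model of a labelled parametrized rational tropical curve in R^2.
  Vertices: a finite set Vs of an arbitrary type. Bounded edges: a set E of two-element
  vertex sets. dir u w: direction vector of the bounded edge {u,w} pointing away from u.
  Non-contracted ends are indexed by i < 3d: endv i is the adjacent vertex and enddir i
  its direction vector. Marked (contracted) ends x_1..x_n are indexed by k < n and
  mk k is the vertex adjacent to x_(k+1). len gives the lengths of bounded edges.\<close>

definition is_path :: "'v set set \<Rightarrow> 'v list \<Rightarrow> 'v \<Rightarrow> 'v \<Rightarrow> bool" where
  "is_path E ps a b \<longleftrightarrow> ps \<noteq> [] \<and> hd ps = a \<and> last ps = b \<and> distinct ps \<and>
     (\<forall>t. Suc t < length ps \<longrightarrow> {ps ! t, ps ! Suc t} \<in> E)"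

definition is_tree :: "'v set \<Rightarrow> 'v set set \<Rightarrow> bool" where
  "is_tree Vs E \<longleftrightarrow> finite Vs \<and> Vs \<noteq> {} \<and>
     E \<subseteq> {{a, b} | a b. a \<in> Vs \<and> b \<in> Vs \<and> a \<noteq> b} \<and>
     (\<forall>a\<in>Vs. \<forall>b\<in>Vs. \<exists>ps. is_path E ps a b) \<and>
     card E + 1 = card Vs"

definition tree_path :: "'v set set \<Rightarrow> 'v \<Rightarrow> 'v \<Rightarrow> 'v list" where
  "tree_path E a b = (THE ps. is_path E ps a b)"

definition nbrs :: "'v set set \<Rightarrow> 'v \<Rightarrow> 'v set" where
  "nbrs E v = {w. {v, w} \<in> E}"

definition valence :: "nat \<Rightarrow> nat \<Rightarrow> 'v set set \<Rightarrow> (nat \<Rightarrow> 'v) \<Rightarrow> (nat \<Rightarrow> 'v) \<Rightarrow> 'v \<Rightarrow> nat" where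
  "valence d n E endv mk v =
     card (nbrs E v) + card {i. i < 3 * d \<and> endv i = v} + card {k. k < n \<and> mk k = v}"

definition is_lab_curve ::
  "nat \<Rightarrow> nat \<Rightarrow> 'v set \<Rightarrow> 'v set set \<Rightarrow> ('v \<Rightarrow> 'v \<Rightarrow> int \<times> int) \<Rightarrow>
   (nat \<Rightarrow> 'v) \<Rightarrow> (nat \<Rightarrow> int \<times> int) \<Rightarrow> (nat \<Rightarrow> 'v) \<Rightarrow> ('v set \<Rightarrow> real) \<Rightarrow> bool" where
  "is_lab_curve d n Vs E dir endv enddir mk len \<longleftrightarrow>
     is_tree Vs E \<and>
     (\<forall>u w. {u, w} \<in> E \<longrightarrow> dir w u = - dir u w) \<and>
     (\<forall>e\<in>E. len e > 0) \<and>
     (\<forall>i<3 * d. endv i \<in> Vs \<and> enddir i \<in> {(-1, 0), (0, -1), (1, 1)}) \<and>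
     card {i. i < 3 * d \<and> enddir i = (-1, 0)} = d \<and>
     card {i. i < 3 * d \<and> enddir i = (0, -1)} = d \<and>
     card {i. i < 3 * d \<and> enddir i = (1, 1)} = d \<and>
     (\<forall>k<n. mk k \<in> Vs) \<and>
     (\<forall>v\<in>Vs. 3 \<le> valence d n E endv mk v) \<and>
     (\<forall>v\<in>Vs. (\<Sum>w\<in>nbrs E v. dir v w) + (\<Sum>i\<in>{i. i < 3 * d \<and> endv i = v}. enddir i) = 0)"

text \<open>A string: a path between two distinct non-contracted ends avoiding the closures of
  all marked ends (i.e. avoiding all vertices adjacent to a marked end).\<close>
definition has_string ::
  "nat \<Rightarrow> nat \<Rightarrow> 'v set set \<Rightarrow> (nat \<Rightarrow> 'v) \<Rightarrow> (nat \<Rightarrow> 'v) \<Rightarrow> bool" where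
  "has_string d n E endv mk \<longleftrightarrow>
     (\<exists>i j ps. i < 3 * d \<and> j < 3 * d \<and> i \<noteq> j \<and> is_path E ps (endv i) (endv j) \<and>
        (\<forall>x\<in>set ps. x \<notin> mk ` {..<n}))"

definition comp2 :: "nat \<Rightarrow> int \<times> int \<Rightarrow> int" where
  "comp2 c v = (if c = 0 then fst v else snd v)"

text \<open>Matrix of ev in the coordinates (h(V0), lengths of bounded edges), with bounded edges
  enumerated by eo (column j+2 is edge eo j) and rows (k,c) enumerated as 2k+c.\<close>
definition ev_matrix ::
  "nat \<Rightarrow> 'v set set \<Rightarrow> ('v \<Rightarrow> 'v \<Rightarrow> int \<times> int) \<Rightarrow> (nat \<Rightarrow> 'v) \<Rightarrow> 'v \<Rightarrow>
   (nat \<Rightarrow> 'v set) \<Rightarrow> real mat" where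
  "ev_matrix n E dir mk V0 eo = mat (2 * n) (2 * n) (\<lambda>(i, j).
      if j < 2 then (if j = i mod 2 then 1 else 0)
      else (let ps = tree_path E V0 (mk (i div 2)) in
            of_int (\<Sum>t<length ps - 1.
               if {ps ! t, ps ! Suc t} = eo (j - 2) then comp2 (i mod 2) (dir (ps ! t) (ps ! Suc t))
               else 0)))"

definition det2 :: "int \<times> int \<Rightarrow> int \<times> int \<Rightarrow> int" where
  "det2 a b = fst a * snd b - snd a * fst b"

text \<open>Adjacent edges of a vertex (bounded edges Inl w, non-contracted ends Inr i) and their
  direction vectors pointing away from the vertex.\<close>
definition adj_edges :: "nat \<Rightarrow> 'v set set \<Rightarrow> (nat \<Rightarrow> 'v) \<Rightarrow> 'v \<Rightarrow> ('v + nat) set" where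
  "adj_edges d E endv v = Inl ` nbrs E v \<union> Inr ` {i. i < 3 * d \<and> endv i = v}"

definition out_dir :: "('v \<Rightarrow> 'v \<Rightarrow> int \<times> int) \<Rightarrow> (nat \<Rightarrow> int \<times> int) \<Rightarrow> 'v \<Rightarrow> 'v + nat \<Rightarrow> int \<times> int" where
  "out_dir dir enddir v a = (case a of Inl w \<Rightarrow> dir v w | Inr i \<Rightarrow> enddir i)"

definition vertex_mult ::
  "nat \<Rightarrow> 'v set set \<Rightarrow> ('v \<Rightarrow> 'v \<Rightarrow> int \<times> int) \<Rightarrow> (nat \<Rightarrow> 'v) \<Rightarrow> (nat \<Rightarrow> int \<times> int) \<Rightarrow> 'v \<Rightarrow> int" where
  "vertex_mult d E dir endv enddir v =
     (SOME m. \<exists>a\<in>adj_edges d E endv v. \<exists>b\<in>adj_edges d E endv v. a \<noteq> b \<and>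
        m = \<bar>det2 (out_dir dir enddir v a) (out_dir dir enddir v b)\<bar>)"

text \<open>nu_C: product over vertices V and j of 1/b_ij!, b_ij = number of non-contracted ends
  of direction -e_j at V (-e_0 = (1,1), -e_1 = (-1,0), -e_2 = (0,-1)).\<close>
definition nu_C :: "nat \<Rightarrow> 'v set \<Rightarrow> (nat \<Rightarrow> 'v) \<Rightarrow> (nat \<Rightarrow> int \<times> int) \<Rightarrow> real" where
  "nu_C d Vs endv enddir = (\<Prod>v\<in>Vs. \<Prod>\<delta>\<in>{(1, 1), (-1, 0), (0, -1)}.
      1 / fact (card {i. i < 3 * d \<and> endv i = v \<and> enddir i = \<delta>}))"

definition mult_C ::
  "nat \<Rightarrow> nat \<Rightarrow> 'v set \<Rightarrow> 'v set set \<Rightarrow> ('v \<Rightarrow> 'v \<Rightarrow> int \<times> int) \<Rightarrow> (nat \<Rightarrow> 'v) \<Rightarrow>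
   (nat \<Rightarrow> int \<times> int) \<Rightarrow> (nat \<Rightarrow> 'v) \<Rightarrow> real" where
  "mult_C d n Vs E dir endv enddir mk = nu_C d Vs endv enddir *
     (\<Prod>v\<in>{v\<in>Vs. valence d n E endv mk v = 3 \<and> v \<notin> mk ` {..<n}}.
        of_int (vertex_mult d E dir endv enddir v))"

end

theory Submission
  imports Defs
begin

definition mkmat :: "nat \<Rightarrow> (nat \<Rightarrow> 'r) \<Rightarrow> (nat \<Rightarrow> 'c) \<Rightarrow> ('r \<Rightarrow> 'c \<Rightarrow> real) \<Rightarrow> real mat" where
  "mkmat N f g A = mat N N (\<lambda>(i,j). A (f i) (g j))"

definition absdet :: "'r set \<Rightarrow> 'c set \<Rightarrow> ('r \<Rightarrow> 'c \<Rightarrow> real) \<Rightarrow> real" where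
  "absdet R C A = \<bar>det (mkmat (card R) (SOME f. bij_betw f {..<card R} R) (SOME g. bij_betw g {..<card R} C) A)\<bar>"

lemma abs_signof: "\<bar>(signof p :: real)\<bar> = 1"
  by (cases p rule: sign_cases) auto

lemma perm_from_bij:
  assumes f1: "bij_betw f1 {..<(N::nat)} R" and f2: "bij_betw f2 {..<N} R"
  defines "p \<equiv> (\<lambda>i. if i < N then inv_into {..<N} f1 (f2 i) else i)"
  shows "p permutes {0..<N}" and "\<And>i. i < N \<Longrightarrow> f1 (p i) = f2 i"
proof -
  have "bij_betw (inv_into {..<N} f1 \<circ> f2) {..<N} {..<N}"
    using bij_betw_trans[OF f2 bij_betw_inv_into[OF f1]] .
  then have "bij_betw p {..<N} {..<N}"
    by (rule bij_betw_cong[THEN iffD1, rotated]) (auto simp: p_def)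
  then have "p permutes {..<N}"
    by (intro bij_imp_permutes) (auto simp: p_def)
  then show "p permutes {0..<N}" by (metis atLeast0LessThan)
  show "f1 (p i) = f2 i" if "i < N" for i
  proof -
    have "f2 i \<in> f1 ` {..<N}" using that f1 f2 by (auto simp: bij_betw_def)
    then show ?thesis using that unfolding p_def by (simp add: f_inv_into_f)
  qed
qed

lemma det_rows_indep:
  assumes f1: "bij_betw f1 {..<(N::nat)} R" and f2: "bij_betw f2 {..<N} R"
  shows "\<bar>det (mkmat N f2 g A)\<bar> = \<bar>det (mkmat N f1 g A)\<bar>"
proof -
  define p where "p = (\<lambda>i. if i < N then inv_into {..<N} f1 (f2 i) else i)"
  have pp: "p permutes {0..<N}" and pf: "\<And>i. i < N \<Longrightarrow> f1 (p i) = f2 i"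
    using perm_from_bij[OF f1 f2] unfolding p_def by auto
  have pN: "i < N \<Longrightarrow> p i < N" for i
    using pp by (metis atLeastLessThan_iff permutes_in_image zero_le)
  have "mkmat N f2 g A = mat N N (\<lambda>(i,j). mkmat N f1 g A $$ (p i, j))"
    by (rule eq_matI) (auto simp: mkmat_def pN pf)
  also have "det \<dots> = signof p * det (mkmat N f1 g A)"
    by (rule det_permute_rows[OF _ pp]) (simp add: mkmat_def)
  finally show ?thesis by (simp add: abs_mult abs_signof)
qed

lemma mkmat_transpose: "transpose_mat (mkmat N f g A) = mkmat N g f (\<lambda>c r. A r c)"
  by (rule eq_matI) (auto simp: mkmat_def)

lemma det_cols_indep:
  assumes g1: "bij_betw g1 {..<N} C" and g2: "bij_betw g2 {..<N} C"
  shows "\<bar>det (mkmat N f g2 A)\<bar> = \<bar>det (mkmat N f g1 A)\<bar>"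
proof -
  have "det (mkmat N f g2 A) = det (transpose_mat (mkmat N f g2 A))"
    by (rule det_transpose[symmetric, of _ N]) (simp add: mkmat_def)
  moreover have "det (mkmat N f g1 A) = det (transpose_mat (mkmat N f g1 A))"
    by (rule det_transpose[symmetric, of _ N]) (simp add: mkmat_def)
  ultimately show ?thesis
    using det_rows_indep[OF g1 g2, of f "\<lambda>c r. A r c"] by (simp add: mkmat_transpose)
qed

lemma absdet_eq:
  assumes f: "bij_betw f {..<N} R" and g: "bij_betw g {..<N} C"
  shows "absdet R C A = \<bar>det (mkmat N f g A)\<bar>"
proof -
  have N: "card R = N" using bij_betw_same_card[OF f] by simp
  have ex1: "\<exists>f. bij_betw f {..<card R} R" using f N by blast
  have ex2: "\<exists>g. bij_betw g {..<card R} C" using g N by blast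
  have s1: "bij_betw (SOME f. bij_betw f {..<card R} R) {..<N} R"
    using someI_ex[OF ex1] N by simp
  have s2: "bij_betw (SOME g. bij_betw g {..<card R} C) {..<N} C"
    using someI_ex[OF ex2] N by simp
  show ?thesis unfolding absdet_def N
    using det_rows_indep[OF f s1, of "SOME g. bij_betw g {..<N} C" A] det_cols_indep[OF g s2, of f A] by (simp add: N)
qed

lemma absdet_cong:
  assumes "finite R" "card C = card R" "finite C"
    and "\<And>r c. r \<in> R \<Longrightarrow> c \<in> C \<Longrightarrow> A r c = B r c"
  shows "absdet R C A = absdet R C B"
proof -
  obtain f where f: "bij_betw f {..<card R} R"
    using assms(1) by (metis ex_bij_betw_nat_finite lessThan_atLeast0)
  obtain g where g: "bij_betw g {..<card R} C"
    using assms(2,3) by (metis ex_bij_betw_nat_finite lessThan_atLeast0)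
  have "mkmat (card R) f g A = mkmat (card R) f g B"
    using f g assms(4) by (intro eq_matI) (auto simp: mkmat_def bij_betw_def)
  then show ?thesis using absdet_eq[OF f g] by simp
qed

lemma ex_bij_nat: "finite R \<Longrightarrow> \<exists>f. bij_betw f {..<card R} R"
  by (metis ex_bij_betw_nat_finite lessThan_atLeast0)

lemma ex_bij_nat': "finite C \<Longrightarrow> card C = N \<Longrightarrow> \<exists>f. bij_betw f {..<N} C"
  using ex_bij_nat by blast

lemma bij_concat:
  assumes f1: "bij_betw f1 {..<(N1::nat)} R1" and f2: "bij_betw f2 {..<N2} R2" and d: "R1 \<inter> R2 = {}"
  shows "bij_betw (\<lambda>i. if i < N1 then f1 i else f2 (i - N1)) {..<N1+N2} (R1 \<union> R2)"
proof -
  let ?f = "\<lambda>i. if i < N1 then f1 i else f2 (i - N1)"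
  have im: "?f ` {..<N1+N2} = R1 \<union> R2"
  proof
    show "?f ` {..<N1+N2} \<subseteq> R1 \<union> R2"
    proof
      fix x assume "x \<in> ?f ` {..<N1+N2}"
      then obtain i where i0: "i \<in> {..<N1+N2}" "x = ?f i" by (rule imageE)
      then have i: "i < N1 + N2" "x = ?f i" by auto
      show "x \<in> R1 \<union> R2"
      proof (cases "i < N1")
        case True then show ?thesis using i f1 by (auto simp: bij_betw_def)
      next
        case False then have "i - N1 < N2" using i by arith
        then show ?thesis using i False f2 by (auto simp: bij_betw_def)
      qed
    qed
    show "R1 \<union> R2 \<subseteq> ?f ` {..<N1+N2}"
    proof
      fix x assume "x \<in> R1 \<union> R2"
      then show "x \<in> ?f ` {..<N1+N2}"
      proof
        assume "x \<in> R1"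
        then obtain i where "i < N1" "x = f1 i" using f1 by (auto simp: bij_betw_def)
        then show ?thesis by (intro image_eqI[of _ _ i]) auto
      next
        assume "x \<in> R2"
        then obtain i where "i < N2" "x = f2 i" using f2 by (auto simp: bij_betw_def)
        then show ?thesis by (intro image_eqI[of _ _ "i + N1"]) auto
      qed
    qed
  qed
  have "inj_on ?f {..<N1+N2}"
  proof (rule inj_onI)
    fix i j assume i: "i \<in> {..<N1+N2}" and j: "j \<in> {..<N1+N2}" and e: "?f i = ?f j"
    have a: "i < N1 \<Longrightarrow> f1 i \<in> R1" "\<not> i < N1 \<Longrightarrow> f2 (i - N1) \<in> R2"
      "j < N1 \<Longrightarrow> f1 j \<in> R1" "\<not> j < N1 \<Longrightarrow> f2 (j - N1) \<in> R2"
      using i j f1 f2 by (auto simp: bij_betw_def)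
    show "i = j"
    proof (cases "i < N1")
      case True
      then show ?thesis
      proof (cases "j < N1")
        case True
        then show ?thesis using \<open>i < N1\<close> e f1 by (auto simp: bij_betw_def inj_on_def)
      next
        case False then show ?thesis using \<open>i < N1\<close> e a d by auto
      qed
    next
      case False
      then show ?thesis
      proof (cases "j < N1")
        case True
        then show ?thesis using \<open>\<not> i < N1\<close> e a d by auto
      next
        case False
        then have "i - N1 = j - N1" using \<open>\<not> i < N1\<close> e f2 i j by (auto simp: bij_betw_def inj_on_def)
        then show ?thesis using False \<open>\<not> i < N1\<close> by simp
      qed
    qed
  qed
  then show ?thesis using im by (simp add: bij_betw_def)
qed

lemma absdet_block:
  assumes fin: "finite R1" "finite R2" "finite C1" "finite C2"
    and d: "R1 \<inter> R2 = {}" "C1 \<inter> C2 = {}"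
    and cd: "card C1 = card R1" "card C2 = card R2"
    and z: "\<And>r c. r \<in> R1 \<Longrightarrow> c \<in> C2 \<Longrightarrow> A r c = 0"
  shows "absdet (R1 \<union> R2) (C1 \<union> C2) A = absdet R1 C1 A * absdet R2 C2 A"
proof -
  define N1 where "N1 = card R1"
  define N2 where "N2 = card R2"
  obtain f1 where f1: "bij_betw f1 {..<N1} R1" using ex_bij_nat[OF fin(1)] N1_def by blast
  obtain f2 where f2: "bij_betw f2 {..<N2} R2" using ex_bij_nat[OF fin(2)] N2_def by blast
  obtain g1 where g1: "bij_betw g1 {..<N1} C1" using ex_bij_nat'[OF fin(3)] cd N1_def by blast
  obtain g2 where g2: "bij_betw g2 {..<N2} C2" using ex_bij_nat'[OF fin(4)] cd N2_def by blast
  let ?f = "\<lambda>i. if i < N1 then f1 i else f2 (i - N1)"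
  let ?g = "\<lambda>i. if i < N1 then g1 i else g2 (i - N1)"
  have f: "bij_betw ?f {..<N1+N2} (R1 \<union> R2)" by (rule bij_concat[OF f1 f2 d(1)])
  have g: "bij_betw ?g {..<N1+N2} (C1 \<union> C2)" by (rule bij_concat[OF g1 g2 d(2)])
  have "mkmat (N1+N2) ?f ?g A = four_block_mat (mkmat N1 f1 g1 A) (0\<^sub>m N1 N2)
      (mat N2 N1 (\<lambda>(i,j). A (f2 i) (g1 j))) (mkmat N2 f2 g2 A)"
  proof (rule eq_matI)
    fix i j assume i: "i < dim_row (four_block_mat (mkmat N1 f1 g1 A) (0\<^sub>m N1 N2)
      (mat N2 N1 (\<lambda>(i,j). A (f2 i) (g1 j))) (mkmat N2 f2 g2 A))"
      and j: "j < dim_col (four_block_mat (mkmat N1 f1 g1 A) (0\<^sub>m N1 N2)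
      (mat N2 N1 (\<lambda>(i,j). A (f2 i) (g1 j))) (mkmat N2 f2 g2 A))"
    have i': "i < N1 + N2" and j': "j < N1 + N2" using i j by (auto simp: mkmat_def)
    have zz: "A (f1 i) (g2 (j - N1)) = 0" if "i < N1" "\<not> j < N1"
      using z[of "f1 i" "g2 (j - N1)"] that j' f1 g2 by (auto simp: bij_betw_def)
    show "mkmat (N1 + N2) ?f ?g A $$ (i, j) = four_block_mat (mkmat N1 f1 g1 A) (0\<^sub>m N1 N2)
      (mat N2 N1 (\<lambda>(i,j). A (f2 i) (g1 j))) (mkmat N2 f2 g2 A) $$ (i, j)"
      using i' j' zz by (auto simp: mkmat_def)
  qed (auto simp: mkmat_def)
  moreover have "det (four_block_mat (mkmat N1 f1 g1 A) (0\<^sub>m N1 N2)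
      (mat N2 N1 (\<lambda>(i,j). A (f2 i) (g1 j))) (mkmat N2 f2 g2 A)) = det (mkmat N1 f1 g1 A) * det (mkmat N2 f2 g2 A)"
    by (rule det_four_block_mat_upper_right_zero) (auto simp: mkmat_def)
  ultimately have "det (mkmat (N1+N2) ?f ?g A) = det (mkmat N1 f1 g1 A) * det (mkmat N2 f2 g2 A)"
    by simp
  then show ?thesis
    using absdet_eq[OF f g, of A] absdet_eq[OF f1 g1, of A] absdet_eq[OF f2 g2, of A]
    by (simp add: abs_mult)
qed

lemma absdet_addrow:
  assumes fin: "finite R" "finite C" "card C = card R"
    and r: "r1 \<in> R" "r0 \<in> R" "r1 \<noteq> r0"
  shows "absdet R C (\<lambda>r c. if r = r1 then A r1 c + a * A r0 c else A r c) = absdet R C A"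
proof -
  define N where "N = card R"
  obtain f where f: "bij_betw f {..<N} R" using ex_bij_nat[OF fin(1)] N_def by blast
  obtain g where g: "bij_betw g {..<N} C" using ex_bij_nat'[OF fin(2)] fin(3) N_def by blast
  define k where "k = inv_into {..<N} f r1"
  define l where "l = inv_into {..<N} f r0"
  have k: "k < N" "f k = r1" using f r unfolding k_def bij_betw_def
    by (auto intro: inv_into_into f_inv_into_f)
  have l: "l < N" "f l = r0" using f r unfolding l_def bij_betw_def
    by (auto intro: inv_into_into f_inv_into_f)
  have fi: "i < N \<Longrightarrow> f i = r1 \<longleftrightarrow> i = k" for i
    using f k unfolding bij_betw_def inj_on_def by auto
  have kl: "k \<noteq> l" using k l r by auto
  have "mkmat N f g (\<lambda>r c. if r = r1 then A r1 c + a * A r0 c else A r c) = addrow a k l (mkmat N f g A)"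
    by (rule eq_matI) (auto simp: mkmat_def mat_addrow_def k l fi)
  then have "det (mkmat N f g (\<lambda>r c. if r = r1 then A r1 c + a * A r0 c else A r c)) = det (mkmat N f g A)"
    using det_addrow[OF l(1) kl, of "mkmat N f g A" a] by (simp add: mkmat_def)
  then show ?thesis using absdet_eq[OF f g] by simp
qed

lemma absdet_2:
  assumes "r1 \<noteq> r2" "c1 \<noteq> c2"
  shows "absdet {r1, r2} {c1, c2} A = \<bar>A r1 c1 * A r2 c2 - A r1 c2 * A r2 c1\<bar>"
proof -
  let ?f = "\<lambda>i::nat. if i = 0 then r1 else r2"
  let ?g = "\<lambda>i::nat. if i = 0 then c1 else c2"
  have lt2: "{..<2::nat} = {0, 1}" by auto
  have f: "bij_betw ?f {..<2} {r1, r2}" unfolding lt2 using assms by (auto simp: bij_betw_def inj_on_def)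
  have g: "bij_betw ?g {..<2} {c1, c2}" unfolding lt2 using assms by (auto simp: bij_betw_def inj_on_def)
  let ?M = "mkmat 2 ?f ?g A"
  have M: "?M \<in> carrier_mat 2 2" by (simp add: mkmat_def)
  have "det ?M = (\<Sum>i<2. ?M $$ (i,0) * cofactor ?M i 0)"
    by (rule laplace_expansion_column[OF M]) simp
  also have "\<dots> = A r1 c1 * A r2 c2 - A r2 c1 * A r1 c2"
  proof -
    have d1: "det (mat_delete (mat 2 2 (\<lambda>(i,j). A (?f i) (?g j))) 0 0) = A r2 c2"
      by (subst det_single) (auto simp: mat_delete_def)
    have d2: "det (mat_delete (mat 2 2 (\<lambda>(i,j). A (?f i) (?g j))) (Suc 0) 0) = A r1 c2"
      by (subst det_single) (auto simp: mat_delete_def)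
    show ?thesis unfolding mkmat_def by (simp add: lt2 cofactor_def d1 d2)
  qed
  finally show ?thesis using absdet_eq[OF f g, of A] by (simp add: algebra_simps)
qed

lemma absdet_relabel:
  assumes fin: "finite R" "finite C" "card C = card R" and inj: "inj_on h R"
    and e: "\<And>r c. r \<in> R \<Longrightarrow> c \<in> C \<Longrightarrow> B (h r) c = A r c"
  shows "absdet (h ` R) C B = absdet R C A"
proof -
  define N where "N = card R"
  obtain f where f: "bij_betw f {..<N} R" using ex_bij_nat[OF fin(1)] N_def by blast
  obtain g where g: "bij_betw g {..<N} C" using ex_bij_nat'[OF fin(2)] fin(3) N_def by blast
  have hf: "bij_betw (h \<circ> f) {..<N} (h ` R)"
    using bij_betw_trans[OF f inj_on_imp_bij_betw[OF inj]] .
  have "mkmat N (h \<circ> f) g B = mkmat N f g A"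
    using f g e by (intro eq_matI) (auto simp: mkmat_def bij_betw_def)
  then show ?thesis using absdet_eq[OF f g, of A] absdet_eq[OF hf g, of B] by simp
qed

lemma absdet_relabel_cols:
  assumes fin: "finite R" "finite C" "card C = card R" and inj: "inj_on h C"
    and e: "\<And>r c. r \<in> R \<Longrightarrow> c \<in> C \<Longrightarrow> B r (h c) = A r c"
  shows "absdet R (h ` C) B = absdet R C A"
proof -
  define N where "N = card R"
  obtain f where f: "bij_betw f {..<N} R" using ex_bij_nat[OF fin(1)] N_def by blast
  obtain g where g: "bij_betw g {..<N} C" using ex_bij_nat'[OF fin(2)] fin(3) N_def by blast
  have hg: "bij_betw (h \<circ> g) {..<N} (h ` C)"
    using bij_betw_trans[OF g inj_on_imp_bij_betw[OF inj]] .
  have "mkmat N f (h \<circ> g) B = mkmat N f g A"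
    using f g e by (intro eq_matI) (auto simp: mkmat_def bij_betw_def)
  then show ?thesis using absdet_eq[OF f g, of A] absdet_eq[OF f hg, of B] by simp
qed

definition wf_edges :: "'v set \<Rightarrow> 'v set set \<Rightarrow> bool" where
  "wf_edges Vs E \<longleftrightarrow> E \<subseteq> {{a, b} | a b. a \<in> Vs \<and> b \<in> Vs \<and> a \<noteq> b}"

lemma tree_wf: "is_tree Vs E \<Longrightarrow> wf_edges Vs E"
  by (simp add: is_tree_def wf_edges_def)

lemma wf_edgeD: "wf_edges Vs E \<Longrightarrow> {x, y} \<in> E \<Longrightarrow> x \<in> Vs \<and> y \<in> Vs \<and> x \<noteq> y"
  unfolding wf_edges_def by (auto simp: doubleton_eq_iff)

lemma is_path_single[simp]: "is_path E [a] a a"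
  by (simp add: is_path_def)

lemma is_path_same: assumes "is_path E ps a a" shows "ps = [a]"
proof -
  have ne: "ps \<noteq> []" and h: "hd ps = a" and l: "last ps = a" and d: "distinct ps"
    using assms by (auto simp: is_path_def)
  show ?thesis
  proof (cases "length ps \<ge> 2")
    case True
    have "ps ! 0 = ps ! (length ps - 1)" using h l ne by (simp add: hd_conv_nth last_conv_nth)
    then have "0 = length ps - 1" using d True nth_eq_iff_index_eq[OF d] by force
    then show ?thesis using True by simp
  next
    case False
    then have "length ps = 1" using ne by (cases ps) (auto simp: Suc_le_eq)
    then show ?thesis using h by (cases ps) auto
  qed
qed

lemma is_path_rev: assumes "is_path E ps a b" shows "is_path E (rev ps) b a"
  unfolding is_path_def
proof (intro conjI allI impI)
  show "rev ps \<noteq> []" "hd (rev ps) = b" "last (rev ps) = a" "distinct (rev ps)"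
    using assms by (auto simp: is_path_def hd_rev last_rev)
  fix t assume t: "Suc t < length (rev ps)"
  let ?n = "length ps"
  have "{ps ! (?n - 2 - t), ps ! Suc (?n - 2 - t)} \<in> E"
    using assms t unfolding is_path_def by auto
  moreover have "rev ps ! t = ps ! Suc (?n - 2 - t)" "rev ps ! Suc t = ps ! (?n - 2 - t)"
    using t by (auto simp: rev_nth Suc_diff_Suc numeral_2_eq_2)
  ultimately show "{rev ps ! t, rev ps ! Suc t} \<in> E" by (simp add: insert_commute)
qed

lemma is_path_snoc:
  assumes "is_path E ps a b" "{b, c} \<in> E" "c \<notin> set ps"
  shows "is_path E (ps @ [c]) a c"
  unfolding is_path_def
proof (intro conjI allI impI)
  show "ps @ [c] \<noteq> []" "last (ps @ [c]) = c" by auto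
  show "hd (ps @ [c]) = a" "distinct (ps @ [c])" using assms by (auto simp: is_path_def)
  fix t assume t: "Suc t < length (ps @ [c])"
  show "{(ps @ [c]) ! t, (ps @ [c]) ! Suc t} \<in> E"
  proof (cases "Suc t < length ps")
    case True then show ?thesis using assms by (auto simp: is_path_def nth_append)
  next
    case False
    then have "t = length ps - 1" "ps \<noteq> []" using t assms by (auto simp: is_path_def)
    then show ?thesis using assms False by (auto simp: is_path_def nth_append last_conv_nth)
  qed
qed

lemma is_path_take:
  assumes "is_path E ps a b" "i < length ps"
  shows "is_path E (take (Suc i) ps) a (ps ! i)"
  unfolding is_path_def
proof (intro conjI allI impI)
  show "take (Suc i) ps \<noteq> []" "distinct (take (Suc i) ps)" "hd (take (Suc i) ps) = a"
    using assms by (auto simp: is_path_def hd_take)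
  show "last (take (Suc i) ps) = ps ! i" using assms(2)
    by (simp add: take_Suc_conv_app_nth)
  fix t assume "Suc t < length (take (Suc i) ps)"
  then show "{take (Suc i) ps ! t, take (Suc i) ps ! Suc t} \<in> E"
    using assms unfolding is_path_def by auto
qed

lemma is_path_mono:
  assumes "is_path E ps a b" "\<And>t. Suc t < length ps \<Longrightarrow> {ps ! t, ps ! Suc t} \<in> E'"
  shows "is_path E' ps a b"
  using assms unfolding is_path_def by auto

lemma is_path_butlast:
  assumes "is_path E ps a b" "a \<noteq> b"
  shows "is_path E (butlast ps) a (last (butlast ps))" "{last (butlast ps), b} \<in> E"
    "ps = butlast ps @ [b]" "b \<notin> set (butlast ps)"
proof -
  have ne: "ps \<noteq> []" and l: "last ps = b" and d: "distinct ps" and h: "hd ps = a"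
    using assms by (auto simp: is_path_def)
  show ps: "ps = butlast ps @ [b]" using ne l append_butlast_last_id by metis
  have len: "length ps \<ge> 2"
  proof (rule ccontr)
    assume "\<not> 2 \<le> length ps"
    then have "length ps = 1" using ne by (cases ps) (auto simp: Suc_le_eq numeral_2_eq_2)
    then show False using h l assms(2) by (cases ps) auto
  qed
  have bl: "butlast ps = take (Suc (length ps - 2)) ps"
    using len by (simp add: butlast_conv_take Suc_diff_Suc numeral_2_eq_2)
  have "is_path E (take (Suc (length ps - 2)) ps) a (ps ! (length ps - 2))"
    by (rule is_path_take[OF assms(1)]) (use len in auto)
  moreover have "last (butlast ps) = ps ! (length ps - 2)"
    using len by (simp add: bl take_Suc_conv_app_nth)
  ultimately show "is_path E (butlast ps) a (last (butlast ps))" by (simp add: bl)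
  have "{ps ! (length ps - 2), ps ! Suc (length ps - 2)} \<in> E"
    using assms(1) len unfolding is_path_def by auto
  moreover have "ps ! Suc (length ps - 2) = b" using len l ne
    by (simp add: last_conv_nth Suc_diff_Suc numeral_2_eq_2)
  ultimately show "{last (butlast ps), b} \<in> E" using \<open>last (butlast ps) = _\<close> by simp
  show "b \<notin> set (butlast ps)" using d ps by (metis distinct_append not_distinct_conv_prefix)
qed

lemma is_path_in_Vs:
  assumes "wf_edges Vs E" "is_path E ps a b" "a \<in> Vs"
  shows "set ps \<subseteq> Vs"
proof
  fix x assume "x \<in> set ps"
  then obtain i where i: "i < length ps" "ps ! i = x" by (auto simp: in_set_conv_nth)
  show "x \<in> Vs"
  proof (cases "Suc i < length ps")
    case True
    then show ?thesis using assms(1,2) i wf_edgeD by (fastforce simp: is_path_def)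
  next
    case False
    show ?thesis
    proof (cases i)
      case 0 then show ?thesis using assms i by (auto simp: is_path_def hd_conv_nth)
    next
      case (Suc j)
      then have "{ps ! j, ps ! Suc j} \<in> E" using assms(2) i unfolding is_path_def by auto
      then show ?thesis using wf_edgeD[OF assms(1)] i Suc by auto
    qed
  qed
qed

lemma is_path_ends_in_Vs:
  assumes "wf_edges Vs E" "is_path E ps a b" "a \<noteq> b"
  shows "a \<in> Vs" "b \<in> Vs"
proof -
  have "{last (butlast ps), b} \<in> E" by (rule is_path_butlast(2)[OF assms(2,3)])
  then show "b \<in> Vs" using wf_edgeD[OF assms(1)] by auto
  have "is_path E (rev ps) b a" by (rule is_path_rev[OF assms(2)])
  then have "{last (butlast (rev ps)), a} \<in> E" using is_path_butlast(2) assms(3) by metis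
  then show "a \<in> Vs" using wf_edgeD[OF assms(1)] by auto
qed

lemma leaf_not_interior:
  assumes "is_path E ps a b" "nbrs E L \<subseteq> {P}" "L \<in> set ps"
  shows "L = a \<or> L = b"
proof (rule ccontr)
  assume nab: "\<not> (L = a \<or> L = b)"
  have ne: "ps \<noteq> []" and h: "hd ps = a" and l: "last ps = b" and d: "distinct ps"
    using assms by (auto simp: is_path_def)
  obtain i where i: "i < length ps" "ps ! i = L" using assms(3) by (auto simp: in_set_conv_nth)
  have i0: "i \<noteq> 0" using i h nab ne by (metis hd_conv_nth)
  have i1: "Suc i < length ps"
  proof (rule ccontr)
    assume "\<not> Suc i < length ps"
    then have "i = length ps - 1" using i by simp
    then show False using i l nab ne by (auto simp: last_conv_nth)
  qed
  obtain j where j: "i = Suc j" using i0 by (cases i) auto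
  have "{ps ! j, L} \<in> E" using assms(1) i j unfolding is_path_def by auto
  then have "ps ! j \<in> nbrs E L" by (simp add: nbrs_def insert_commute)
  moreover have "{L, ps ! Suc i} \<in> E" using assms(1) i i1 unfolding is_path_def by auto
  then have "ps ! Suc i \<in> nbrs E L" by (simp add: nbrs_def)
  moreover have "ps ! j \<noteq> ps ! Suc i" using d i1 j by (simp add: nth_eq_iff_index_eq)
  ultimately show False using assms(2) by auto
qed

lemma nbrs_finite: "wf_edges Vs E \<Longrightarrow> finite Vs \<Longrightarrow> finite (nbrs E v)"
  by (rule finite_subset[of _ Vs]) (auto simp: nbrs_def dest: wf_edgeD)

lemma nbrs_subset: "wf_edges Vs E \<Longrightarrow> nbrs E v \<subseteq> Vs"
  by (auto simp: nbrs_def dest: wf_edgeD)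

lemma handshake:
  assumes "finite Vs" "wf_edges Vs E"
  shows "(\<Sum>v\<in>Vs. card (nbrs E v)) = 2 * card E"
proof -
  have fE: "finite E"
  proof -
    have "E \<subseteq> Pow Vs" using assms(2) unfolding wf_edges_def by auto
    then show ?thesis using assms(1) by (meson finite_Pow_iff finite_subset)
  qed
  define F where "F e = {(v, w). {v, w} = e}" for e :: "'a set"
  have S: "(SIGMA v:Vs. nbrs E v) = (\<Union>e\<in>E. F e)"
    using assms(2) by (auto simp: F_def nbrs_def dest: wf_edgeD)
  have F2: "card (F e) = 2" if eE: "e \<in> E" for e
  proof -
    obtain a b where e: "e = {a, b}" "a \<noteq> b" using eE assms(2) unfolding wf_edges_def by blast
    have "F e = {(a, b), (b, a)}" using e by (auto simp: F_def doubleton_eq_iff)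
    then show ?thesis using e by simp
  qed
  have Ffin: "finite (F e)" if "e \<in> E" for e using F2[OF that] card.infinite by fastforce
  have "(\<Sum>v\<in>Vs. card (nbrs E v)) = card (SIGMA v:Vs. nbrs E v)"
    using assms by (simp add: card_SigmaI nbrs_finite)
  also have "\<dots> = card (\<Union>e\<in>E. F e)" by (simp add: S)
  also have "\<dots> = (\<Sum>e\<in>E. card (F e))"
    by (rule card_UN_disjoint[OF fE]) (use Ffin in \<open>auto simp: F_def\<close>)
  also have "\<dots> = 2 * card E" by (simp add: F2)
  finally show ?thesis .
qed

lemma tree_finite_E: assumes "is_tree Vs E" shows "finite E"
proof -
  have "E \<subseteq> Pow Vs" using assms unfolding is_tree_def by auto
  then show ?thesis using assms by (meson finite_Pow_iff finite_subset is_tree_def)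
qed

lemma tree_nbr_exists:
  assumes "is_tree Vs E" "v \<in> Vs" "u \<in> Vs" "u \<noteq> v"
  shows "nbrs E v \<noteq> {}"
proof -
  obtain ps where p: "is_path E ps v u" using assms unfolding is_tree_def by blast
  have "{last (butlast (rev ps)), v} \<in> E"
    using is_path_butlast(2)[OF is_path_rev[OF p]] assms(4) by metis
  then show ?thesis by (auto simp: nbrs_def insert_commute)
qed

lemma tree_leaf_exists:
  assumes "is_tree Vs E" "2 \<le> card Vs"
  shows "\<exists>L\<in>Vs. \<exists>P. nbrs E L = {P}"
proof (rule ccontr)
  assume no: "\<not> ?thesis"
  have fin: "finite Vs" and wf: "wf_edges Vs E" and ce: "card E + 1 = card Vs"
    using assms tree_wf by (auto simp: is_tree_def)
  have "card (nbrs E v) \<ge> 2" if v: "v \<in> Vs" for v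
  proof -
    obtain u where u: "u \<in> Vs" "u \<noteq> v"
    proof -
      have "Vs - {v} \<noteq> {}"
      proof
        assume "Vs - {v} = {}" then have "Vs \<subseteq> {v}" by auto
        then have "card Vs \<le> 1" using card_mono[of "{v}" Vs] by simp
        then show False using assms(2) by simp
      qed
      then show ?thesis using that by blast
    qed
    have ne: "nbrs E v \<noteq> {}" by (rule tree_nbr_exists[OF assms(1) v u(1) u(2)])
    have "card (nbrs E v) \<noteq> 1" using no v by (auto simp: card_1_singleton_iff)
    moreover have "card (nbrs E v) \<noteq> 0" using ne nbrs_finite[OF wf fin] by auto
    ultimately show ?thesis by linarith
  qed
  then have "(\<Sum>v\<in>Vs. 2) \<le> (\<Sum>v\<in>Vs. card (nbrs E v))" by (intro sum_mono) auto
  then have "2 * card Vs \<le> 2 * card E" using handshake[OF fin wf] by simp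
  then show False using ce by simp
qed

lemma tree_remove_leaf:
  assumes t: "is_tree Vs E" and L: "L \<in> Vs" and nL: "nbrs E L = {P}"
  shows "is_tree (Vs - {L}) (E - {{L, P}})"
proof -
  have fin: "finite Vs" and wf: "wf_edges Vs E" and ce: "card E + 1 = card Vs"
    and con: "\<forall>a\<in>Vs. \<forall>b\<in>Vs. \<exists>ps. is_path E ps a b"
    using t tree_wf by (auto simp: is_tree_def)
  have LP: "{L, P} \<in> E" using nL by (auto simp: nbrs_def)
  have P: "P \<in> Vs" "P \<noteq> L" using wf_edgeD[OF wf LP] by auto
  have fE: "finite E" by (rule tree_finite_E[OF t])
  show ?thesis unfolding is_tree_def
  proof (intro conjI ballI)
    show "finite (Vs - {L})" using fin by simp
    show "Vs - {L} \<noteq> {}" using P by auto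
    show "E - {{L, P}} \<subseteq> {{a, b} |a b. a \<in> Vs - {L} \<and> b \<in> Vs - {L} \<and> a \<noteq> b}"
    proof
      fix e assume e: "e \<in> E - {{L, P}}"
      then obtain a b where ab: "e = {a, b}" "a \<in> Vs" "b \<in> Vs" "a \<noteq> b"
        using t unfolding is_tree_def by blast
      have "a \<noteq> L"
      proof
        assume "a = L" then have "b \<in> nbrs E L" using e ab by (auto simp: nbrs_def)
        then show False using nL e ab \<open>a = L\<close> by auto
      qed
      moreover have "b \<noteq> L"
      proof
        assume "b = L" then have "a \<in> nbrs E L" using e ab by (auto simp: nbrs_def insert_commute)
        then show False using nL e ab \<open>b = L\<close> by (auto simp: insert_commute)
      qed
      ultimately show "e \<in> {{a, b} |a b. a \<in> Vs - {L} \<and> b \<in> Vs - {L} \<and> a \<noteq> b}"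
        using ab by blast
    qed
    fix a b assume a: "a \<in> Vs - {L}" and b: "b \<in> Vs - {L}"
    obtain ps where ps: "is_path E ps a b" using con a b by blast
    have nL': "L \<notin> set ps" using leaf_not_interior[OF ps, of L P] nL a b by auto
    have "is_path (E - {{L, P}}) ps a b"
    proof (rule is_path_mono[OF ps])
      fix t assume t: "Suc t < length ps"
      have "{ps ! t, ps ! Suc t} \<in> E" using ps t unfolding is_path_def by auto
      moreover have "ps ! t \<noteq> L" "ps ! Suc t \<noteq> L" using nL' t by (auto simp: in_set_conv_nth)
      ultimately show "{ps ! t, ps ! Suc t} \<in> E - {{L, P}}" by (auto simp: doubleton_eq_iff)
    qed
    then show "\<exists>ps. is_path (E - {{L, P}}) ps a b" by blast
  next
    show "card (E - {{L, P}}) + 1 = card (Vs - {L})"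
    proof -
      have "card E > 0" using LP fE by (auto simp: card_gt_0_iff)
      then show ?thesis using ce LP L fE fin by (simp add: card_Diff_singleton)
    qed
  qed
qed

lemma tree_unique_aux:
  assumes "card Vs = n" "is_tree Vs E" "is_path E p a b" "is_path E q a b"
  shows "p = q"
  using assms
proof (induction n arbitrary: Vs E a b p q rule: less_induct)
  case (less n)
  note t = less.prems(2)
  have wf: "wf_edges Vs E" using t by (rule tree_wf)
  show ?case
  proof (cases "a = b")
    case True
    then have "p = [a]" "q = [a]" using is_path_same less.prems(3,4) by auto
    then show ?thesis by simp
  next
    case False
    have aV: "a \<in> Vs" "b \<in> Vs" using is_path_ends_in_Vs[OF wf less.prems(3) False] by auto
    have fin: "finite Vs" using t by (simp add: is_tree_def)
    have c2: "2 \<le> card Vs"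
    proof -
      have "{a, b} \<subseteq> Vs" using aV by auto
      then have "card {a, b} \<le> card Vs" using fin by (rule card_mono[rotated])
      then show ?thesis using False by simp
    qed
    obtain L P where L: "L \<in> Vs" and nL: "nbrs E L = {P}" using tree_leaf_exists[OF t c2] by blast
    define E' where "E' = E - {{L, P}}"
    have t': "is_tree (Vs - {L}) E'" unfolding E'_def by (rule tree_remove_leaf[OF t L nL])
    have "card (Vs - {L}) < card Vs" by (rule card_Diff1_less[OF fin L])
    then have cn: "card (Vs - {L}) < n" using less.prems(1) by simp
    have to': "is_path E' ps x y" if "is_path E ps x y" "L \<notin> set ps" for ps x y
    proof (rule is_path_mono[OF that(1)])
      fix t assume tt: "Suc t < length ps"
      have "{ps ! t, ps ! Suc t} \<in> E" using that(1) tt unfolding is_path_def by auto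
      moreover have "ps ! t \<noteq> L" "ps ! Suc t \<noteq> L" using that(2) tt by (auto simp: in_set_conv_nth)
      ultimately show "{ps ! t, ps ! Suc t} \<in> E'" by (auto simp: doubleton_eq_iff E'_def)
    qed
    have endL: "p' = q'" if p': "is_path E p' x L" and q': "is_path E q' x L" and xL: "x \<noteq> L" for p' q' x
    proof -
      note bp = is_path_butlast[OF p' xL]
      note bq = is_path_butlast[OF q' xL]
      have "last (butlast p') \<in> nbrs E L" using bp(2) by (simp add: nbrs_def insert_commute)
      then have lp: "last (butlast p') = P" using nL by auto
      have "last (butlast q') \<in> nbrs E L" using bq(2) by (simp add: nbrs_def insert_commute)
      then have lq: "last (butlast q') = P" using nL by auto
      have b1: "is_path E' (butlast p') x P" using to'[OF bp(1) bp(4)] lp by simp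
      have b2: "is_path E' (butlast q') x P" using to'[OF bq(1) bq(4)] lq by simp
      have "butlast p' = butlast q'"
        by (rule less.IH[OF cn refl t' b1 b2])
      then show ?thesis using bp(3) bq(3) by (metis (no_types))
    qed
    show ?thesis
    proof (cases "L = b")
      case True then show ?thesis using endL[of p a q] less.prems(3,4) False by simp
    next
      case Lb: False
      show ?thesis
      proof (cases "L = a")
        case True
        have "rev p = rev q" using endL[of "rev p" b "rev q"] is_path_rev[OF less.prems(3)] is_path_rev[OF less.prems(4)]
          True False by simp
        then show ?thesis by simp
      next
        case False
        have "L \<notin> set p" using leaf_not_interior[OF less.prems(3), of L P] nL False Lb by auto
        moreover have "L \<notin> set q" using leaf_not_interior[OF less.prems(4), of L P] nL False Lb by auto
        ultimately show ?thesis using less.IH[OF cn refl t' to'[OF less.prems(3)] to'[OF less.prems(4)]] by simp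
      qed
    qed
  qed
qed

lemma tree_unique: "is_tree Vs E \<Longrightarrow> is_path E p a b \<Longrightarrow> is_path E q a b \<Longrightarrow> p = q"
  by (rule tree_unique_aux[OF refl])

lemma tree_path_is_path:
  assumes "is_tree Vs E" "a \<in> Vs" "b \<in> Vs"
  shows "is_path E (tree_path E a b) a b"
proof -
  obtain ps where ps: "is_path E ps a b" using assms unfolding is_tree_def by blast
  have "\<exists>!ps. is_path E ps a b" using ps tree_unique[OF assms(1)] by blast
  then show ?thesis unfolding tree_path_def by (rule theI')
qed

lemma tree_path_eq:
  assumes "is_tree Vs E" "is_path E ps a b"
  shows "tree_path E a b = ps"
proof -
  have "\<exists>!ps. is_path E ps a b" using assms tree_unique[OF assms(1)] by blast
  then show ?thesis unfolding tree_path_def using assms(2) by (simp add: the1_equality)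
qed

lemma tree_path_remove:
  assumes t: "is_tree Vs E" and L: "L \<in> Vs" and nL: "nbrs E L = {P}"
    and x: "x \<in> Vs - {L}" and y: "y \<in> Vs - {L}"
  shows "tree_path (E - {{L, P}}) x y = tree_path E x y"
proof -
  have t': "is_tree (Vs - {L}) (E - {{L, P}})" by (rule tree_remove_leaf[OF t L nL])
  have p: "is_path (E - {{L, P}}) (tree_path (E - {{L, P}}) x y) x y"
    by (rule tree_path_is_path[OF t' x y])
  have "is_path E (tree_path (E - {{L, P}}) x y) x y"
    by (rule is_path_mono[OF p]) (use p in \<open>auto simp: is_path_def\<close>)
  then show ?thesis using tree_path_eq[OF t] by metis
qed

lemma tree_path_remove_leaf:
  assumes t: "is_tree Vs E" and L: "L \<in> Vs" and nL: "nbrs E L = {P}"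
    and x: "x \<in> Vs - {L}"
  shows "tree_path E x L = tree_path (E - {{L, P}}) x P @ [L]"
proof -
  have t': "is_tree (Vs - {L}) (E - {{L, P}})" by (rule tree_remove_leaf[OF t L nL])
  have LP: "{L, P} \<in> E" using nL by (auto simp: nbrs_def)
  have P: "P \<in> Vs - {L}" using wf_edgeD[OF tree_wf[OF t] LP] by auto
  have p: "is_path (E - {{L, P}}) (tree_path (E - {{L, P}}) x P) x P"
    by (rule tree_path_is_path[OF t' x P])
  have p2: "is_path E (tree_path (E - {{L, P}}) x P) x P"
    by (rule is_path_mono[OF p]) (use p in \<open>auto simp: is_path_def\<close>)
  have "set (tree_path (E - {{L, P}}) x P) \<subseteq> Vs - {L}"
    by (rule is_path_in_Vs[OF tree_wf[OF t'] p x])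
  then have "L \<notin> set (tree_path (E - {{L, P}}) x P)" by auto
  then have "is_path E (tree_path (E - {{L, P}}) x P @ [L]) x L"
    using is_path_snoc[OF p2, of L] LP by (simp add: insert_commute)
  then show ?thesis using tree_path_eq[OF t] by metis
qed

lemma tree_path_nbr:
  assumes t: "is_tree Vs E" and a: "a \<in> Vs" and xy: "{x, y} \<in> E"
  shows "tree_path E a y = tree_path E a x @ [y] \<or> tree_path E a x = tree_path E a y @ [x]"
proof -
  have wf: "wf_edges Vs E" by (rule tree_wf[OF t])
  have xV: "x \<in> Vs" "y \<in> Vs" "x \<noteq> y" using wf_edgeD[OF wf xy] by auto
  define ps where "ps = tree_path E a x"
  have ps: "is_path E ps a x" unfolding ps_def by (rule tree_path_is_path[OF t a xV(1)])
  show ?thesis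
  proof (cases "y \<in> set ps")
    case False
    have "is_path E (ps @ [y]) a y" by (rule is_path_snoc[OF ps xy False])
    then show ?thesis using tree_path_eq[OF t] ps_def by metis
  next
    case True
    then obtain i where i: "i < length ps" "ps ! i = y" by (auto simp: in_set_conv_nth)
    have p1: "is_path E (take (Suc i) ps) a y" using is_path_take[OF ps i(1)] i(2) by simp
    have "x \<notin> set (take (Suc i) ps)"
    proof
      assume "x \<in> set (take (Suc i) ps)"
      then obtain j where j: "j < Suc i" "ps ! j = x" using i(1) by (auto simp: in_set_conv_nth)
      have "ps ! (length ps - 1) = x" using ps by (auto simp: is_path_def last_conv_nth)
      moreover have d: "distinct ps" using ps by (simp add: is_path_def)
      ultimately have "j = length ps - 1" using j i(1) nth_eq_iff_index_eq[OF d] by auto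
      then have "j = i" using j i(1) by auto
      then show False using j i xV(3) by simp
    qed
    then have "is_path E (take (Suc i) ps @ [x]) a x"
      using is_path_snoc[OF p1, of x] xy by (simp add: insert_commute)
    then have "tree_path E a x = tree_path E a y @ [x]"
      using tree_path_eq[OF t] p1 by metis
    then show ?thesis by simp
  qed
qed

definition psum :: "('v \<Rightarrow> 'v \<Rightarrow> int \<times> int) \<Rightarrow> 'v list \<Rightarrow> 'v set \<Rightarrow> nat \<Rightarrow> int" where
  "psum dir ps e c = (\<Sum>t<length ps - 1.
      if {ps ! t, ps ! Suc t} = e then comp2 c (dir (ps ! t) (ps ! Suc t)) else 0)"

lemma psum_snoc:
  assumes "ps \<noteq> []"
  shows "psum dir (ps @ [z]) e c = psum dir ps e c +
    (if {last ps, z} = e then comp2 c (dir (last ps) z) else 0)"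
proof -
  have l: "length (ps @ [z]) - 1 = Suc (length ps - 1)" using assms by simp
  have "psum dir (ps @ [z]) e c = (\<Sum>t<length ps - 1.
      if {(ps @ [z]) ! t, (ps @ [z]) ! Suc t} = e then comp2 c (dir ((ps @ [z]) ! t) ((ps @ [z]) ! Suc t)) else 0)
      + (if {(ps @ [z]) ! (length ps - 1), (ps @ [z]) ! Suc (length ps - 1)} = e
         then comp2 c (dir ((ps @ [z]) ! (length ps - 1)) ((ps @ [z]) ! Suc (length ps - 1))) else 0)"
    unfolding psum_def l by simp
  also have "(\<Sum>t<length ps - 1.
      if {(ps @ [z]) ! t, (ps @ [z]) ! Suc t} = e then comp2 c (dir ((ps @ [z]) ! t) ((ps @ [z]) ! Suc t)) else 0)
      = psum dir ps e c"
    unfolding psum_def by (intro sum.cong) (auto simp: nth_append)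
  also have "(ps @ [z]) ! (length ps - 1) = last ps" using assms by (simp add: nth_append last_conv_nth)
  also have "(ps @ [z]) ! Suc (length ps - 1) = z" using assms by (simp add: nth_append)
  finally show ?thesis .
qed

lemma psum_zero:
  assumes "\<And>t. Suc t < length ps \<Longrightarrow> {ps ! t, ps ! Suc t} \<noteq> e"
  shows "psum dir ps e c = 0"
  unfolding psum_def using assms by (intro sum.neutral) auto

lemma psum_path_zero:
  assumes "is_path E ps a b" "e \<notin> E"
  shows "psum dir ps e c = 0"
  using assms by (intro psum_zero) (auto simp: is_path_def)

definition Aent :: "'v set set \<Rightarrow> ('v \<Rightarrow> 'v \<Rightarrow> int \<times> int) \<Rightarrow> 'v \<Rightarrow> 'v \<times> nat \<Rightarrow> nat + 'v set \<Rightarrow> real" where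
  "Aent E dir V0 r cl = (case cl of Inl j \<Rightarrow> if j = snd r then 1 else 0
     | Inr e \<Rightarrow> of_int (psum dir (tree_path E V0 (fst r)) e (snd r)))"

definition gs :: "'v set \<Rightarrow> 'v set set \<Rightarrow> ('v \<Rightarrow> 'v \<Rightarrow> int \<times> int) \<Rightarrow> 'v set \<Rightarrow> bool" where
  "gs Vs E dir M \<longleftrightarrow> is_tree Vs E \<and> M \<subseteq> Vs \<and> (\<forall>u w. {u, w} \<in> E \<longrightarrow> dir w u = - dir u w) \<and>
    (\<forall>u\<in>Vs - M. card (nbrs E u) = 2 \<or> card (nbrs E u) = 3) \<and>
    (\<forall>u\<in>Vs - M. card (nbrs E u) = 3 \<longrightarrow> (\<Sum>w\<in>nbrs E u. dir u w) = 0) \<and>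
    (\<forall>a b ps. a \<in> Vs - M \<and> b \<in> Vs - M \<and> a \<noteq> b \<and> card (nbrs E a) = 2 \<and> card (nbrs E b) = 2 \<and>
        is_path E ps a b \<longrightarrow> \<not> set ps \<subseteq> Vs - M)"

definition gm :: "'v set set \<Rightarrow> ('v \<Rightarrow> 'v \<Rightarrow> int \<times> int) \<Rightarrow> 'v \<Rightarrow> int" where
  "gm E dir u = (SOME m. \<exists>w1\<in>nbrs E u. \<exists>w2\<in>nbrs E u. w1 \<noteq> w2 \<and> m = \<bar>det2 (dir u w1) (dir u w2)\<bar>)"

lemma det2_swap: "\<bar>det2 a b\<bar> = \<bar>det2 b a\<bar>"
  unfolding det2_def by (simp add: abs_minus_commute mult.commute)

lemma det2_neg1: "\<bar>det2 (- a) b\<bar> = \<bar>det2 a b\<bar>"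
  by (simp add: det2_def)

lemma det2_sum3:
  assumes "a + b + c = (0 :: int \<times> int)"
  shows "\<bar>det2 a c\<bar> = \<bar>det2 a b\<bar>" "\<bar>det2 b c\<bar> = \<bar>det2 a b\<bar>"
proof -
  have c: "c = - a - b" using assms by (simp add: algebra_simps eq_neg_iff_add_eq_0)
  show "\<bar>det2 a c\<bar> = \<bar>det2 a b\<bar>" "\<bar>det2 b c\<bar> = \<bar>det2 a b\<bar>"
    unfolding c det2_def by (simp_all add: algebra_simps abs_minus_commute)
qed

lemma pair_det_const:
  fixes f :: "'a \<Rightarrow> int \<times> int"
  assumes fin: "finite S" and cS: "card S = 2 \<or> card S = 3"
    and bal: "card S = 3 \<Longrightarrow> (\<Sum>x\<in>S. f x) = 0"
    and p: "p \<in> S" "q \<in> S" "p \<noteq> q" and p': "p' \<in> S" "q' \<in> S" "p' \<noteq> q'"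
  shows "\<bar>det2 (f p') (f q')\<bar> = \<bar>det2 (f p) (f q)\<bar>"
proof (cases "card S = 2")
  case True
  then obtain x y where S: "S = {x, y}" "x \<noteq> y" by (meson card_2_iff)
  show ?thesis using p p' S det2_swap[of "f x" "f y"] by auto
next
  case False
  then have "card S = 3" using cS by simp
  then obtain x y z where S: "S = {x, y, z}" "x \<noteq> y" "x \<noteq> z" "y \<noteq> z" by (meson card_3_iff)
  have "f x + f y + f z = 0" using bal \<open>card S = 3\<close> S by (simp add: algebra_simps)
  note d = det2_sum3[OF this]
  have s1: "\<bar>det2 (f y) (f x)\<bar> = \<bar>det2 (f x) (f y)\<bar>" by (rule det2_swap)
  have s2: "\<bar>det2 (f z) (f x)\<bar> = \<bar>det2 (f x) (f y)\<bar>" using d(1) det2_swap[of "f z" "f x"] by simp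
  have s3: "\<bar>det2 (f z) (f y)\<bar> = \<bar>det2 (f x) (f y)\<bar>" using d(2) det2_swap[of "f z" "f y"] by simp
  have all: "\<bar>det2 (f a) (f b)\<bar> = \<bar>det2 (f x) (f y)\<bar>" if "a \<in> S" "b \<in> S" "a \<noteq> b" for a b
  proof -
    have "a = x \<or> a = y \<or> a = z" "b = x \<or> b = y \<or> b = z" using that(1,2) S(1) by auto
    then show ?thesis using that(3) d s1 s2 s3 by (elim disjE) simp_all
  qed
  show ?thesis using all[OF p] all[OF p'] by simp
qed

lemma gm_eq:
  assumes g: "gs Vs E dir M" and u: "u \<in> Vs - M" and w: "w1 \<in> nbrs E u" "w2 \<in> nbrs E u" "w1 \<noteq> w2"
  shows "gm E dir u = \<bar>det2 (dir u w1) (dir u w2)\<bar>"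
proof -
  have t: "is_tree Vs E" using g by (simp add: gs_def)
  have fin: "finite (nbrs E u)" using nbrs_finite[OF tree_wf[OF t]] t by (simp add: is_tree_def)
  have cS: "card (nbrs E u) = 2 \<or> card (nbrs E u) = 3" using g u by (simp add: gs_def)
  have bal: "card (nbrs E u) = 3 \<Longrightarrow> (\<Sum>x\<in>nbrs E u. dir u x) = 0" using g u by (simp add: gs_def)
  have ex: "\<exists>m. \<exists>w1\<in>nbrs E u. \<exists>w2\<in>nbrs E u. w1 \<noteq> w2 \<and> m = \<bar>det2 (dir u w1) (dir u w2)\<bar>"
    using w by blast
  obtain a b where ab: "a \<in> nbrs E u" "b \<in> nbrs E u" "a \<noteq> b" "gm E dir u = \<bar>det2 (dir u a) (dir u b)\<bar>"
    using someI_ex[OF ex] unfolding gm_def by blast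
  show ?thesis using ab(4) pair_det_const[OF fin cS bal w ab(1-3)] by simp
qed

lemma nbrs_remove: "nbrs (E - {{a, b}}) w = nbrs E w - {x. {w, x} = {a, b}}"
  by (auto simp: nbrs_def)

lemma nbrs_remove_other: "w \<noteq> a \<Longrightarrow> w \<noteq> b \<Longrightarrow> nbrs (E - {{a, b}}) w = nbrs E w"
  by (auto simp: nbrs_def doubleton_eq_iff)

lemma is_path_cons:
  assumes "is_path E ps a b" "{c, a} \<in> E" "c \<notin> set ps"
  shows "is_path E (c # ps) c b"
proof -
  have "is_path E (rev ps @ [c]) b c"
    using is_path_snoc[OF is_path_rev[OF assms(1)]] assms(2,3) by (simp add: insert_commute)
  then show ?thesis using is_path_rev by fastforce
qed

lemma gs_tree: "gs Vs E dir M \<Longrightarrow> is_tree Vs E" by (simp add: gs_def)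

lemma find_red:
  assumes g: "gs Vs E dir M" and V0: "V0 \<in> Vs" and c2: "2 \<le> card Vs"
  shows "(\<exists>L P. L \<in> M \<and> nbrs E L = {P} \<and> P \<in> M \<and> L \<noteq> V0)
    \<or> (\<exists>u L Q. u \<in> Vs - M \<and> nbrs E u = {L, Q} \<and> L \<noteq> Q \<and> L \<in> M \<and> nbrs E L = {u} \<and> L \<noteq> V0 \<and> u \<noteq> V0)
    \<or> (\<exists>u L1 L2. u \<in> Vs - M \<and> L1 \<in> nbrs E u \<and> L2 \<in> nbrs E u \<and> L1 \<noteq> L2 \<and> L1 \<in> M \<and> L2 \<in> M \<and>
         nbrs E L1 = {u} \<and> nbrs E L2 = {u} \<and> L1 \<noteq> V0 \<and> L2 \<noteq> V0)"
proof -
  have t: "is_tree Vs E" using g by (simp add: gs_def)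
  have wf: "wf_edges Vs E" by (rule tree_wf[OF t])
  have fin: "finite Vs" using t by (simp add: is_tree_def)
  have MV: "M \<subseteq> Vs" using g by (simp add: gs_def)
  have deg: "\<And>u. u \<in> Vs - M \<Longrightarrow> card (nbrs E u) = 2 \<or> card (nbrs E u) = 3" using g by (simp add: gs_def)
  define tp where "tp = tree_path E V0"
  have tpp: "x \<in> Vs \<Longrightarrow> is_path E (tp x) V0 x" for x unfolding tp_def by (rule tree_path_is_path[OF t V0])
  have tpne: "x \<in> Vs \<Longrightarrow> tp x \<noteq> []" for x using tpp by (simp add: is_path_def)
  have tp0: "tp V0 = [V0]" by (rule is_path_same[OF tpp[OF V0]])
  have tpnb: "tp y = tp x @ [y] \<or> tp x = tp y @ [x]" if "{x, y} \<in> E" for x y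
    unfolding tp_def by (rule tree_path_nbr[OF t V0 that])
  have tplast: "last (tp x) = x" if "x \<in> Vs" for x using tpp[OF that] by (simp add: is_path_def)
  have nbV: "y \<in> Vs" if "y \<in> nbrs E x" for x y using that wf_edgeD[OF wf] by (auto simp: nbrs_def)
  have nbE: "{x, y} \<in> E" if "y \<in> nbrs E x" for x y using that by (simp add: nbrs_def)
  have nbne: "x \<noteq> y" if "y \<in> nbrs E x" for x y using that wf_edgeD[OF wf] by (auto simp: nbrs_def)
  define K where "K = Max ((\<lambda>x. length (tp x)) ` Vs)"
  have maxd: "x \<in> Vs \<Longrightarrow> length (tp x) \<le> K" for x unfolding K_def using fin by auto
  obtain L where L: "L \<in> Vs" "length (tp L) = K"
  proof -
    have "K \<in> (\<lambda>x. length (tp x)) ` Vs" unfolding K_def using fin V0 by (intro Max_in) auto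
    then show ?thesis using that by auto
  qed
  have K2: "2 \<le> K"
  proof -
    obtain v where v: "v \<in> Vs" "v \<noteq> V0"
    proof -
      have "Vs - {V0} \<noteq> {}"
      proof
        assume "Vs - {V0} = {}" then have "Vs \<subseteq> {V0}" by auto
        then have "card Vs \<le> 1" using card_mono[of "{V0}" Vs] by simp
        then show False using c2 by simp
      qed
      then show ?thesis using that by blast
    qed
    have "length (tp v) \<ge> 2"
    proof (rule ccontr)
      assume "\<not> 2 \<le> length (tp v)"
      then have "length (tp v) = 1" using tpne[OF v(1)] by (cases "tp v") (auto simp: Suc_le_eq numeral_2_eq_2)
      then obtain w where "tp v = [w]" by (cases "tp v") auto
      then show False using tpp[OF v(1)] v(2) by (auto simp: is_path_def)
    qed
    then show ?thesis using maxd[OF v(1)] by simp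
  qed
  have deep: "x \<in> M \<and> x \<noteq> V0 \<and> (\<exists>P. nbrs E x = {P} \<and> tp x = tp P @ [x])"
    if x: "x \<in> Vs" "length (tp x) = K" for x
  proof -
    have xV0: "x \<noteq> V0" using x tp0 K2 by auto
    have par: "tp x = tp y @ [x]" if y: "y \<in> nbrs E x" for y
    proof -
      have "\<not> tp y = tp x @ [y]"
      proof
        assume "tp y = tp x @ [y]"
        then have "length (tp y) = K + 1" using x by simp
        then show False using maxd[OF nbV[OF y]] by simp
      qed
      then show ?thesis using tpnb[OF nbE[OF y]] by simp
    qed
    have uniq: "y = last (butlast (tp x))" if y: "y \<in> nbrs E x" for y
      using par[OF y] tplast[OF nbV[OF y]] tpne[OF nbV[OF y]] by simp
    have ne: "nbrs E x \<noteq> {}" using tree_nbr_exists[OF t x(1) V0] xV0 by auto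
    then obtain P where P: "P \<in> nbrs E x" by blast
    have nx: "nbrs E x = {P}" using uniq P ne by blast
    have "x \<in> M"
    proof (rule ccontr)
      assume "x \<notin> M"
      then have "card (nbrs E x) = 2 \<or> card (nbrs E x) = 3" using deg x(1) by auto
      then show False using nx by simp
    qed
    then show ?thesis using xV0 nx par[OF P] by auto
  qed
  obtain P where LM: "L \<in> M" "L \<noteq> V0" and nL: "nbrs E L = {P}" and tpL: "tp L = tp P @ [L]"
    using deep[OF L] by blast
  show ?thesis
  proof (cases "P \<in> M")
    case True
    show ?thesis by (rule disjI1, rule exI[of _ L], rule exI[of _ P]) (use True LM nL in auto)
  next
    case False
    have PV: "P \<in> Vs" using nbV nL by auto
    have LP: "L \<in> nbrs E P" using nL by (auto simp: nbrs_def insert_commute)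
    define ch where "ch = {y \<in> nbrs E P. tp y = tp P @ [y]}"
    have chprop: "y \<in> M \<and> y \<noteq> V0 \<and> nbrs E y = {P}" if y: "y \<in> ch" for y
    proof -
      have yV: "y \<in> Vs" and yt: "tp y = tp P @ [y]" using y nbV unfolding ch_def by auto
      have "length (tp y) = K" using yt tpL L(2) by simp
      then obtain P' where d: "y \<in> M" "y \<noteq> V0" "nbrs E y = {P'}" "tp y = tp P' @ [y]"
        using deep[OF yV] by blast
      then have "tp P' = tp P" using yt by simp
      moreover have "P' \<in> Vs" using nbV[of P' y] d(3) by simp
      ultimately have "P' = P" using tplast[OF PV] tplast[of P'] by simp
      then show ?thesis using d by simp
    qed
    have Lch: "L \<in> ch" unfolding ch_def using LP tpL by simp
    have rest: "nbrs E P - ch \<subseteq> {last (butlast (tp P))}"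
    proof
      fix y assume y: "y \<in> nbrs E P - ch"
      then have "tp P = tp y @ [P]" using tpnb[OF nbE[of y P]] unfolding ch_def by auto
      moreover have yV: "y \<in> Vs" using y nbV[of y P] by simp
      ultimately have "butlast (tp P) = tp y" by simp
      then show "y \<in> {last (butlast (tp P))}" using tplast[OF yV] by simp
    qed
    have restV0: "nbrs E P - ch = {}" if "P = V0"
    proof (rule ccontr)
      assume "nbrs E P - ch \<noteq> {}"
      then obtain y where y: "y \<in> nbrs E P" "y \<notin> ch" by blast
      then have "tp P = tp y @ [P]" using tpnb[OF nbE[of y P]] unfolding ch_def by auto
      then show False using that tp0 tpne[OF nbV[OF y(1)]] by simp
    qed
    have finN: "finite (nbrs E P)" by (rule nbrs_finite[OF wf fin])
    have cardch: "card (nbrs E P) \<le> card ch + 1"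
    proof -
      have "nbrs E P = ch \<union> (nbrs E P - ch)" unfolding ch_def by auto
      then have "card (nbrs E P) \<le> card ch + card (nbrs E P - ch)"
        using card_Un_le[of ch "nbrs E P - ch"] by simp
      moreover have "card (nbrs E P - ch) \<le> 1" using card_mono[OF _ rest] by simp
      ultimately show ?thesis by simp
    qed
    have PM: "P \<in> Vs - M" using PV False by simp
    have "card (nbrs E P) = 2 \<or> card (nbrs E P) = 3" using deg[OF PM] .
    then show ?thesis
    proof
      assume c3: "card (nbrs E P) = 3"
      have finch: "finite ch" using finN unfolding ch_def by simp
      have "card ch \<ge> 2" using cardch c3 by simp
      then obtain y where y: "y \<in> ch" "y \<noteq> L"
      proof -
        have "ch - {L} \<noteq> {}"
        proof
          assume "ch - {L} = {}" then have "ch \<subseteq> {L}" by auto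
          then have "card ch \<le> 1" using card_mono[of "{L}" ch] by simp
          then show False using \<open>card ch \<ge> 2\<close> by simp
        qed
        then show ?thesis using that by blast
      qed
      have yn: "y \<in> nbrs E P" using y unfolding ch_def by simp
      show ?thesis
        by (rule disjI2, rule disjI2, rule exI[of _ P], rule exI[of _ L], rule exI[of _ y])
          (use yn chprop[OF y(1)] chprop[OF Lch] LP y(2) PM in auto)
    next
      assume c2': "card (nbrs E P) = 2"
      then obtain a b where ab: "nbrs E P = {a, b}" "a \<noteq> b" by (meson card_2_iff)
      obtain Q where Q: "nbrs E P = {L, Q}" "L \<noteq> Q" using ab LP by auto
      show ?thesis
      proof (cases "P = V0")
        case False
        show ?thesis by (rule disjI2, rule disjI1, rule exI[of _ P], rule exI[of _ L], rule exI[of _ Q])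
          (use False PM Q LM nL in auto)
      next
        case True
        have "Q \<in> ch" using restV0[OF True] Q by auto
        show ?thesis
          by (rule disjI2, rule disjI2, rule exI[of _ P], rule exI[of _ L], rule exI[of _ Q])
            (use chprop[OF \<open>Q \<in> ch\<close>] chprop[OF Lch] LP Q PM in auto)
      qed
    qed
  qed
qed

lemma gs_MV: "gs Vs E dir M \<Longrightarrow> M \<subseteq> Vs" by (simp add: gs_def)
lemma gs_anti: "gs Vs E dir M \<Longrightarrow> {u, w} \<in> E \<Longrightarrow> dir w u = - dir u w" by (simp add: gs_def)
lemma gs_deg: "gs Vs E dir M \<Longrightarrow> u \<in> Vs - M \<Longrightarrow> card (nbrs E u) = 2 \<or> card (nbrs E u) = 3"
  by (simp add: gs_def)
lemma gs_bal: "gs Vs E dir M \<Longrightarrow> u \<in> Vs - M \<Longrightarrow> card (nbrs E u) = 3 \<Longrightarrow> (\<Sum>w\<in>nbrs E u. dir u w) = 0"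
  by (simp add: gs_def)

lemma gs_nostring:
  assumes g: "gs Vs E dir M" and "a \<in> Vs - M" "b \<in> Vs - M" "a \<noteq> b" "card (nbrs E a) = 2"
    "card (nbrs E b) = 2" "is_path E ps a b" "set ps \<subseteq> Vs - M"
  shows False
proof -
  have "\<forall>a b ps. a \<in> Vs - M \<and> b \<in> Vs - M \<and> a \<noteq> b \<and> card (nbrs E a) = 2 \<and> card (nbrs E b) = 2 \<and>
        is_path E ps a b \<longrightarrow> \<not> set ps \<subseteq> Vs - M" using g by (simp add: gs_def)
  then have "\<not> set ps \<subseteq> Vs - M" using assms(2-7) by blast
  then show False using assms(8) by simp
qed

lemma gs_sub:
  assumes g: "gs Vs E dir M" and t': "is_tree Vs' E'" and EE: "E' \<subseteq> E"
    and M': "M' \<subseteq> Vs'" and U: "Vs' - M' \<subseteq> Vs - M"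
    and nb: "\<And>w. w \<in> Vs' - M' \<Longrightarrow> nbrs E' w = nbrs E w"
  shows "gs Vs' E' dir M'"
  unfolding gs_def
proof (intro conjI allI impI ballI)
  show "is_tree Vs' E'" by (rule t')
  show "M' \<subseteq> Vs'" by (rule M')
  show "dir w u = - dir u w" if "{u, w} \<in> E'" for u w using gs_anti[OF g] that EE by auto
  show "card (nbrs E' u) = 2 \<or> card (nbrs E' u) = 3" if "u \<in> Vs' - M'" for u
    using gs_deg[OF g] that U nb[OF that] by auto
  show "(\<Sum>w\<in>nbrs E' u. dir u w) = 0" if "u \<in> Vs' - M'" "card (nbrs E' u) = 3" for u
    using gs_bal[OF g] that U nb[OF that(1)] by auto
  fix a b ps
  assume h: "a \<in> Vs' - M' \<and> b \<in> Vs' - M' \<and> a \<noteq> b \<and> card (nbrs E' a) = 2 \<and> card (nbrs E' b) = 2 \<and> is_path E' ps a b"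
  have p0: "is_path E' ps a b" using h by simp
  have p: "is_path E ps a b" by (rule is_path_mono[OF p0]) (use p0 EE in \<open>auto simp: is_path_def\<close>)
  show "\<not> set ps \<subseteq> Vs' - M'"
  proof
    assume "set ps \<subseteq> Vs' - M'"
    then have "set ps \<subseteq> Vs - M" using U by auto
    moreover have "a \<in> Vs - M" "b \<in> Vs - M" using h U by auto
    moreover have "card (nbrs E a) = 2" "card (nbrs E b) = 2" using h nb by auto
    ultimately show False using gs_nostring[OF g, of a b ps] h p by simp
  qed
qed

lemma red0_gs:
  assumes g: "gs Vs E dir M" and L: "L \<in> M" and nL: "nbrs E L = {P}" and P: "P \<in> M"
  shows "gs (Vs - {L}) (E - {{L, P}}) dir (M - {L})"
proof -
  have t: "is_tree Vs E" and MV: "M \<subseteq> Vs" using g by (auto simp: gs_tree gs_MV)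
  show ?thesis
  proof (rule gs_sub[OF g])
    show "is_tree (Vs - {L}) (E - {{L, P}})" by (rule tree_remove_leaf[OF t _ nL]) (use L MV in auto)
    show "nbrs (E - {{L, P}}) w = nbrs E w" if "w \<in> Vs - {L} - (M - {L})" for w
      using that P by (intro nbrs_remove_other) auto
  qed (use MV in auto)
qed

lemma redCh_gs:
  assumes g: "gs Vs E dir M" and u: "u \<in> Vs - M" and L: "L1 \<in> nbrs E u" "L2 \<in> nbrs E u" "L1 \<noteq> L2"
    "L1 \<in> M" "L2 \<in> M" and n1: "nbrs E L1 = {u}" and n2: "nbrs E L2 = {u}"
  shows "is_tree (Vs - {L1}) (E - {{L1, u}})"
    "nbrs (E - {{L1, u}}) L2 = {u}"
    "gs (Vs - {L1} - {L2}) (E - {{L1, u}} - {{L2, u}}) dir (M - {L1} - {L2} \<union> {u})"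
proof -
  have t: "is_tree Vs E" and MV: "M \<subseteq> Vs" using g by (auto simp: gs_tree gs_MV)
  show t1: "is_tree (Vs - {L1}) (E - {{L1, u}})" by (rule tree_remove_leaf[OF t _ n1]) (use L MV in auto)
  show n2': "nbrs (E - {{L1, u}}) L2 = {u}" using n2 L u by (subst nbrs_remove_other) auto
  show "gs (Vs - {L1} - {L2}) (E - {{L1, u}} - {{L2, u}}) dir (M - {L1} - {L2} \<union> {u})"
  proof (rule gs_sub[OF g])
    show "is_tree (Vs - {L1} - {L2}) (E - {{L1, u}} - {{L2, u}})"
      by (rule tree_remove_leaf[OF t1 _ n2']) (use L MV in auto)
    show "nbrs (E - {{L1, u}} - {{L2, u}}) w = nbrs E w"
      if "w \<in> Vs - {L1} - {L2} - (M - {L1} - {L2} \<union> {u})" for w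
    proof -
      have "w \<noteq> L1" "w \<noteq> L2" "w \<noteq> u" using that by auto
      then show ?thesis by (simp add: nbrs_remove_other)
    qed
  qed (use MV u L in auto)
qed

lemma redEnd_gs:
  assumes g: "gs Vs E dir M" and u: "u \<in> Vs - M" and nu: "nbrs E u = {L, Q}" and LQ: "L \<noteq> Q"
    and L: "L \<in> M" and nL: "nbrs E L = {u}"
  shows "is_tree (Vs - {L}) (E - {{L, u}})"
    "nbrs (E - {{L, u}}) u = {Q}"
    "gs (Vs - {L} - {u}) (E - {{L, u}} - {{u, Q}}) dir (M - {L})"
    "\<And>w. w \<noteq> L \<Longrightarrow> w \<noteq> u \<Longrightarrow> w \<noteq> Q \<Longrightarrow> nbrs (E - {{L, u}} - {{u, Q}}) w = nbrs E w"
    "nbrs (E - {{L, u}} - {{u, Q}}) Q = nbrs E Q - {u}"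
    "Q \<notin> M \<Longrightarrow> card (nbrs E Q) = 3"
proof -
  have t: "is_tree Vs E" and MV: "M \<subseteq> Vs" using g by (auto simp: gs_tree gs_MV)
  have wf: "wf_edges Vs E" by (rule tree_wf[OF t])
  have fin: "finite Vs" using t by (simp add: is_tree_def)
  have uQ: "{u, Q} \<in> E" using nu by (auto simp: nbrs_def)
  have QV: "Q \<in> Vs" "Q \<noteq> u" using wf_edgeD[OF wf uQ] by auto
  have uL: "u \<noteq> L" using u L by auto
  show t1: "is_tree (Vs - {L}) (E - {{L, u}})" by (rule tree_remove_leaf[OF t _ nL]) (use L MV in auto)
  show n1: "nbrs (E - {{L, u}}) u = {Q}" using nu LQ uL by (auto simp: nbrs_remove doubleton_eq_iff)
  have t2: "is_tree (Vs - {L} - {u}) (E - {{L, u}} - {{u, Q}})"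
    by (rule tree_remove_leaf[OF t1 _ n1]) (use u uL in auto)
  show nbo: "nbrs (E - {{L, u}} - {{u, Q}}) w = nbrs E w" if "w \<noteq> L" "w \<noteq> u" "w \<noteq> Q" for w
    using that by (simp add: nbrs_remove_other)
  have QL: "Q \<noteq> L" using LQ by simp
  show nbQ: "nbrs (E - {{L, u}} - {{u, Q}}) Q = nbrs E Q - {u}"
    using QL QV(2) by (auto simp: nbrs_remove doubleton_eq_iff)
  have c3: "card (nbrs E Q) = 3" if QM: "Q \<notin> M"
  proof -
    have "card (nbrs E Q) = 2 \<or> card (nbrs E Q) = 3" using gs_deg[OF g] QM QV by auto
    moreover have "card (nbrs E Q) \<noteq> 2"
    proof
      assume c: "card (nbrs E Q) = 2"
      have "card (nbrs E u) = 2" using nu LQ by simp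
      moreover have "is_path E [u, Q] u Q" using uQ QV by (auto simp: is_path_def less_Suc_eq)
      moreover have "set [u, Q] \<subseteq> Vs - M" using u QM QV by auto
      ultimately show False using gs_nostring[OF g, of u Q "[u, Q]"] c u QM QV by simp
    qed
    ultimately show ?thesis by simp
  qed
  then show "Q \<notin> M \<Longrightarrow> card (nbrs E Q) = 3" .
  show "gs (Vs - {L} - {u}) (E - {{L, u}} - {{u, Q}}) dir (M - {L})"
    unfolding gs_def
  proof (intro conjI allI impI ballI)
    show "is_tree (Vs - {L} - {u}) (E - {{L, u}} - {{u, Q}})" by (rule t2)
    show "M - {L} \<subseteq> Vs - {L} - {u}" using MV u by auto
    show "dir w x = - dir x w" if "{x, w} \<in> E - {{L, u}} - {{u, Q}}" for x w using gs_anti[OF g] that by auto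
    fix x assume x: "x \<in> Vs - {L} - {u} - (M - {L})"
    have xU: "x \<in> Vs - M" "x \<noteq> u" "x \<noteq> L" using x L by auto
    show "card (nbrs (E - {{L, u}} - {{u, Q}}) x) = 2 \<or> card (nbrs (E - {{L, u}} - {{u, Q}}) x) = 3"
    proof (cases "x = Q")
      case True
      have "u \<in> nbrs E Q" using uQ by (auto simp: nbrs_def insert_commute)
      moreover have "finite (nbrs E Q)" by (rule nbrs_finite[OF wf fin])
      ultimately have "card (nbrs E Q - {u}) = 2" using c3 True xU by (simp add: card_Diff_singleton)
      then show ?thesis using nbQ True by simp
    next
      case False
      then show ?thesis using nbo[OF xU(3) xU(2) False] gs_deg[OF g] xU by auto
    qed
    show "(\<Sum>w\<in>nbrs (E - {{L, u}} - {{u, Q}}) x. dir x w) = 0" if "card (nbrs (E - {{L, u}} - {{u, Q}}) x) = 3"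
    proof (cases "x = Q")
      case True
      have "u \<in> nbrs E Q" using uQ by (auto simp: nbrs_def insert_commute)
      moreover have "finite (nbrs E Q)" by (rule nbrs_finite[OF wf fin])
      ultimately have "card (nbrs E Q - {u}) = 2" using c3 True xU by (simp add: card_Diff_singleton)
      then show ?thesis using nbQ True that by simp
    next
      case False
      then show ?thesis using nbo[OF xU(3) xU(2) False] gs_bal[OF g] xU that by auto
    qed
  next
    fix a b ps
    let ?E = "E - {{L, u}} - {{u, Q}}"
    assume h: "a \<in> Vs - {L} - {u} - (M - {L}) \<and> b \<in> Vs - {L} - {u} - (M - {L}) \<and> a \<noteq> b \<and>
      card (nbrs ?E a) = 2 \<and> card (nbrs ?E b) = 2 \<and> is_path ?E ps a b"
    have p0: "is_path ?E ps a b" using h by simp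
    have p: "is_path E ps a b" by (rule is_path_mono[OF p0]) (use p0 in \<open>auto simp: is_path_def\<close>)
    show "\<not> set ps \<subseteq> Vs - {L} - {u} - (M - {L})"
    proof
      assume S: "set ps \<subseteq> Vs - {L} - {u} - (M - {L})"
      have deg2: "card (nbrs E x) = 2" if "x \<in> {a, b}" "x \<noteq> Q" for x
        using that h nbo[of x] by auto
      have aU: "a \<in> Vs - M" "b \<in> Vs - M" using h L by auto
      have S0: "set ps \<subseteq> Vs - M" using S L by auto
      have noQ: False if "a \<noteq> Q" "b \<noteq> Q"
        using gs_nostring[OF g aU _ _ _ p S0] deg2[of a] deg2[of b] that h by simp
      have withQ: False if hh: "b \<in> Vs - M" "b \<noteq> Q" "card (nbrs E b) = 2" "is_path E ps Q b"
        and SS: "set ps \<subseteq> Vs - M - {u}" for b ps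
      proof -
        have "is_path E (u # ps) u b"
          using is_path_cons[OF hh(4), of u] uQ SS by auto
        moreover have "card (nbrs E u) = 2" using nu LQ by simp
        moreover have "set (u # ps) \<subseteq> Vs - M" using SS u by auto
        moreover have "u \<noteq> b"
        proof -
          have "b \<in> set ps" using hh(4) by (auto simp: is_path_def)
          then show ?thesis using SS by auto
        qed
        ultimately show False using gs_nostring[OF g u hh(1), of "u # ps"] hh(3) by simp
      qed
      have S': "set ps \<subseteq> Vs - M - {u}" using S L by auto
      show False
      proof (cases "a = Q")
        case True
        then have "b \<noteq> Q" using h by auto
        then show False using withQ[of b ps] aU deg2[of b] p True S' by auto
      next
        case aQ: False
        show False
        proof (cases "b = Q")
          case True
          have "is_path E (rev ps) Q a" using p True is_path_rev by fastforce
          moreover have "set (rev ps) \<subseteq> Vs - M - {u}" using S' by auto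
          ultimately show False using withQ[of a "rev ps"] aU deg2[of a] aQ by auto
        next
          case False
          then show False using noQ aQ by simp
        qed
      qed
    qed
  qed
qed

lemma count_bound_aux:
  assumes "card Vs = n" "gs Vs E dir M"
  shows "card (Vs - M) + 1 \<le> card M"
  using assms
proof (induction n arbitrary: Vs E M rule: less_induct)
  case (less n)
  note g = less.prems(2)
  have t: "is_tree Vs E" by (rule gs_tree[OF g])
  have MV: "M \<subseteq> Vs" by (rule gs_MV[OF g])
  have fin: "finite Vs" and ne: "Vs \<noteq> {}" using t by (auto simp: is_tree_def)
  have finM: "finite M" using MV fin finite_subset by blast
  obtain V0 where V0: "V0 \<in> Vs" using ne by blast
  show ?case
  proof (cases "card Vs \<ge> 2")
    case False
    then have "card Vs = 1" using ne fin by (metis One_nat_def card_gt_0_iff less_2_cases not_le zero_less_iff_neq_zero)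
    then obtain v where Vv: "Vs = {v}" by (auto simp: card_1_singleton_iff)
    have vM: "v \<in> M"
    proof (rule ccontr)
      assume "v \<notin> M"
      then have d: "card (nbrs E v) = 2 \<or> card (nbrs E v) = 3" using gs_deg[OF g] Vv by auto
      have "nbrs E v \<subseteq> Vs - {v}" using wf_edgeD[OF tree_wf[OF t]] by (auto simp: nbrs_def)
      then have "nbrs E v = {}" using Vv by auto
      then show False using d by simp
    qed
    then have "M = {v}" using MV Vv by auto
    then show ?thesis using Vv by simp
  next
    case True
    have cn: "\<And>X. X \<subseteq> Vs \<Longrightarrow> X \<noteq> Vs \<Longrightarrow> card X < n"
      using less.prems(1) fin by (metis psubsetI psubset_card_mono)
    note fr = find_red[OF g V0 True]
    show ?thesis
    proof (cases "\<exists>L P. L \<in> M \<and> nbrs E L = {P} \<and> P \<in> M \<and> L \<noteq> V0")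
      case True
      then obtain L P where h: "L \<in> M" "nbrs E L = {P}" "P \<in> M" by blast
      have g': "gs (Vs - {L}) (E - {{L, P}}) dir (M - {L})" by (rule red0_gs[OF g h])
      have "card (Vs - {L}) < n" using cn[of "Vs - {L}"] h MV by auto
      then have "card (Vs - {L} - (M - {L})) + 1 \<le> card (M - {L})" using less.IH[OF _ refl g'] by simp
      moreover have "Vs - {L} - (M - {L}) = Vs - M" using h by auto
      moreover have "card (M - {L}) = card M - 1" using h finM by simp
      ultimately show ?thesis by simp
    next
      case False
      then have fr2: "(\<exists>u L Q. u \<in> Vs - M \<and> nbrs E u = {L, Q} \<and> L \<noteq> Q \<and> L \<in> M \<and> nbrs E L = {u} \<and> L \<noteq> V0 \<and> u \<noteq> V0)
        \<or> (\<exists>u L1 L2. u \<in> Vs - M \<and> L1 \<in> nbrs E u \<and> L2 \<in> nbrs E u \<and> L1 \<noteq> L2 \<and> L1 \<in> M \<and> L2 \<in> M \<and>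
         nbrs E L1 = {u} \<and> nbrs E L2 = {u} \<and> L1 \<noteq> V0 \<and> L2 \<noteq> V0)" using fr by blast
      show ?thesis
      proof (cases "\<exists>u L Q. u \<in> Vs - M \<and> nbrs E u = {L, Q} \<and> L \<noteq> Q \<and> L \<in> M \<and> nbrs E L = {u} \<and> L \<noteq> V0 \<and> u \<noteq> V0")
        case True
        then obtain u L Q where h: "u \<in> Vs - M" "nbrs E u = {L, Q}" "L \<noteq> Q" "L \<in> M" "nbrs E L = {u}"
          by blast
        note r = redEnd_gs[OF g h]
        have "card (Vs - {L} - {u}) < n" using cn[of "Vs - {L} - {u}"] h MV by auto
        then have "card (Vs - {L} - {u} - (M - {L})) + 1 \<le> card (M - {L})" using less.IH[OF _ refl r(3)] by simp
        moreover have "Vs - {L} - {u} - (M - {L}) = (Vs - M) - {u}" using h by auto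
        moreover have "card ((Vs - M) - {u}) = card (Vs - M) - 1" using h fin by simp
        moreover have "card (M - {L}) = card M - 1" using h finM by simp
        moreover have "card (Vs - M) \<ge> 1" using h(1) fin by (metis One_nat_def Suc_leI card_gt_0_iff empty_iff finite_Diff)
        ultimately show ?thesis by simp
      next
        case False
        then obtain u L1 L2 where h: "u \<in> Vs - M" "L1 \<in> nbrs E u" "L2 \<in> nbrs E u" "L1 \<noteq> L2" "L1 \<in> M" "L2 \<in> M"
          "nbrs E L1 = {u}" "nbrs E L2 = {u}" using fr2 by blast
        note r = redCh_gs[OF g h]
        have "card (Vs - {L1} - {L2}) < n" using cn[of "Vs - {L1} - {L2}"] h MV by auto
        then have "card (Vs - {L1} - {L2} - (M - {L1} - {L2} \<union> {u})) + 1 \<le> card (M - {L1} - {L2} \<union> {u})"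
          using less.IH[OF _ refl r(3)] by simp
        moreover have "Vs - {L1} - {L2} - (M - {L1} - {L2} \<union> {u}) = (Vs - M) - {u}" using h by auto
        moreover have "card ((Vs - M) - {u}) = card (Vs - M) - 1" using h fin by simp
        moreover have "card (M - {L1} - {L2} \<union> {u}) = card M - 1"
        proof -
          have "card (M - {L1} - {L2}) = card M - 2" using h finM by (simp add: card_Diff_singleton)
          moreover have "u \<notin> M - {L1} - {L2}" using h by auto
          moreover have "card M \<ge> 2"
          proof -
            have "{L1, L2} \<subseteq> M" using h by auto
            then show ?thesis using card_mono[OF finM, of "{L1, L2}"] h by simp
          qed
          ultimately show ?thesis using finM by simp
        qed
        moreover have "card (Vs - M) \<ge> 1" using h(1) fin by (metis One_nat_def Suc_leI card_gt_0_iff empty_iff finite_Diff)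
        ultimately show ?thesis by simp
      qed
    qed
  qed
qed

lemma count_bound: "gs Vs E dir M \<Longrightarrow> card (Vs - M) + 1 \<le> card M"
  by (rule count_bound_aux[OF refl])

lemma Aent_Inl[simp]: "Aent E dir V0 r (Inl j) = (if j = snd r then 1 else 0)"
  by (simp add: Aent_def)

lemma Aent_Inr[simp]: "Aent E dir V0 r (Inr e) = of_int (psum dir (tree_path E V0 (fst r)) e (snd r))"
  by (simp add: Aent_def)

lemma psum_path_snoc:
  assumes "is_path E' p a b" "e \<notin> E'"
  shows "psum dir (p @ [z]) e c = (if {b, z} = e then comp2 c (dir b z) else 0)"
proof -
  have "p \<noteq> []" "last p = b" using assms(1) by (auto simp: is_path_def)
  then show ?thesis using psum_snoc[of p dir z e c] psum_path_zero[OF assms] by simp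
qed

lemma card_cols:
  fixes E :: "'a set"
  assumes "finite E"
  shows "card (Inl ` {0, 1::nat} \<union> Inr ` E :: (nat + 'a) set) = card E + 2"
proof -
  have "card (Inl ` {0, 1::nat} \<union> Inr ` E :: (nat + 'a) set) = card (Inl ` {0, 1::nat} :: (nat + 'a) set) + card (Inr ` E :: (nat + 'a) set)"
    using assms by (intro card_Un_disjoint) auto
  also have "\<dots> = 2 + card E" by (simp add: card_image)
  finally show ?thesis by simp
qed

lemma card_rows:
  assumes "finite M"
  shows "card (M \<times> {0, 1::nat}) = 2 * card M"
  using assms by (simp add: card_cartesian_product)

lemma comp2_simps[simp]: "comp2 0 v = fst v" "comp2 (Suc 0) v = snd v"
  by (auto simp: comp2_def)

lemma step_end:
  assumes g: "gs Vs E dir M" and cE: "card E + 2 = 2 * card M" and V0: "V0 \<in> Vs"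
    and u: "u \<in> Vs - M" and nu: "nbrs E u = {L, Q}" and LQ: "L \<noteq> Q" and L: "L \<in> M"
    and nL: "nbrs E L = {u}" and LV0: "L \<noteq> V0" and uV0: "u \<noteq> V0"
    and IH: "absdet ((M - {L}) \<times> {0, 1}) (Inl ` {0, 1} \<union> Inr ` (E - {{L, u}} - {{u, Q}}))
        (Aent (E - {{L, u}} - {{u, Q}}) dir V0)
      = (\<Prod>w\<in>Vs - {L} - {u} - (M - {L}). real_of_int (gm (E - {{L, u}} - {{u, Q}}) dir w))"
  shows "absdet (M \<times> {0, 1}) (Inl ` {0, 1} \<union> Inr ` E) (Aent E dir V0)
      = (\<Prod>w\<in>Vs - M. real_of_int (gm E dir w))"
proof -
  define E1 where "E1 = E - {{L, u}}"
  define E2 where "E2 = E1 - {{u, Q}}"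
  define M2 where "M2 = M - {L}"
  define Vs2 where "Vs2 = Vs - {L} - {u}"
  note r = redEnd_gs[OF g u nu LQ L nL]
  have t: "is_tree Vs E" by (rule gs_tree[OF g])
  have MV: "M \<subseteq> Vs" by (rule gs_MV[OF g])
  have fin: "finite Vs" using t by (simp add: is_tree_def)
  have finM: "finite M" using MV fin finite_subset by blast
  have finE: "finite E" by (rule tree_finite_E[OF t])
  have t1: "is_tree (Vs - {L}) E1" unfolding E1_def by (rule r(1))
  have nu1: "nbrs E1 u = {Q}" unfolding E1_def by (rule r(2))
  have g2: "gs Vs2 E2 dir M2" unfolding Vs2_def E2_def E1_def M2_def by (rule r(3))
  have t2: "is_tree Vs2 E2" by (rule gs_tree[OF g2])
  have LV: "L \<in> Vs" using L MV by auto
  have Lu: "{L, u} \<in> E" using nL by (auto simp: nbrs_def)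
  have uQ: "{u, Q} \<in> E" using nu by (auto simp: nbrs_def)
  have QV: "Q \<in> Vs" "Q \<noteq> u" using wf_edgeD[OF tree_wf[OF t] uQ] by auto
  have QL: "Q \<noteq> L" using LQ by simp
  have uL: "u \<noteq> L" using u L by auto
  have QV2: "Q \<in> Vs2" using QV QL unfolding Vs2_def by auto
  have V02: "V0 \<in> Vs2" using V0 LV0 uV0 unfolding Vs2_def by auto
  have e12: "{u, Q} \<noteq> {L, u}" using QL uL by (auto simp: doubleton_eq_iff)
  have E2E: "E = E2 \<union> {{u, Q}, {L, u}}" using Lu uQ unfolding E2_def E1_def by auto
  have nE2: "{u, Q} \<notin> E2" "{L, u} \<notin> E2" unfolding E2_def E1_def by auto
  have finE2: "finite E2" using finE unfolding E2_def E1_def by simp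
  have cE2: "card E2 + 2 = card E"
  proof -
    have "card E1 = card E - 1" using Lu finE unfolding E1_def by simp
    moreover have "card E2 = card E1 - 1" using uQ e12 finE unfolding E2_def E1_def by simp
    moreover have "card E \<ge> 2"
    proof -
      have "{{u, Q}, {L, u}} \<subseteq> E" using Lu uQ by auto
      then show ?thesis using card_mono[OF finE, of "{{u, Q}, {L, u}}"] e12 by simp
    qed
    ultimately show ?thesis by simp
  qed
  have cM2: "card M2 + 1 = card M" using card_Suc_Diff1[OF finM L] unfolding M2_def by simp
  have tpx: "tree_path E V0 x = tree_path E2 V0 x" if x: "x \<in> Vs2" for x
  proof -
    have "tree_path E1 V0 x = tree_path E V0 x"
      unfolding E1_def by (rule tree_path_remove[OF t LV nL]) (use x V0 LV0 in \<open>auto simp: Vs2_def\<close>)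
    moreover have "tree_path E2 V0 x = tree_path E1 V0 x"
      unfolding E2_def by (rule tree_path_remove[OF t1 _ nu1]) (use x V02 u uL in \<open>auto simp: Vs2_def\<close>)
    ultimately show ?thesis by simp
  qed
  have tpL: "tree_path E V0 L = (tree_path E2 V0 Q @ [u]) @ [L]"
  proof -
    have "tree_path E V0 L = tree_path E1 V0 u @ [L]"
      unfolding E1_def by (rule tree_path_remove_leaf[OF t LV nL]) (use V0 LV0 in auto)
    moreover have "tree_path E1 V0 u = tree_path E2 V0 Q @ [u]"
      unfolding E2_def by (rule tree_path_remove_leaf[OF t1 _ nu1]) (use V0 uV0 LV0 u uL in auto)
    ultimately show ?thesis by simp
  qed
  have p2: "is_path E2 (tree_path E2 V0 Q) V0 Q" by (rule tree_path_is_path[OF t2 V02 QV2])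
  have ent1: "psum dir (tree_path E V0 L) {u, Q} c = comp2 c (dir Q u)" for c
  proof -
    have ne: "tree_path E2 V0 Q @ [u] \<noteq> []" by simp
    have "psum dir (tree_path E2 V0 Q @ [u]) {u, Q} c = comp2 c (dir Q u)"
      using psum_path_snoc[OF p2 nE2(1), of dir u c] by (simp add: insert_commute)
    then show ?thesis unfolding tpL using psum_snoc[OF ne, of dir L "{u, Q}" c] e12
      by (simp add: insert_commute)
  qed
  have ent2: "psum dir (tree_path E V0 L) {L, u} c = comp2 c (dir u L)" for c
  proof -
    have ne: "tree_path E2 V0 Q @ [u] \<noteq> []" by simp
    have "psum dir (tree_path E2 V0 Q @ [u]) {L, u} c = 0"
      using psum_path_snoc[OF p2 nE2(2), of dir u c] QL uL by (auto simp: doubleton_eq_iff)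
    then show ?thesis unfolding tpL using psum_snoc[OF ne, of dir L "{L, u}" c]
      by (simp add: insert_commute)
  qed
  define R1 where "R1 = M2 \<times> {0, 1::nat}"
  define R2 where "R2 = {(L, 0::nat), (L, 1)}"
  define C1 where "C1 = (Inl ` {0, 1::nat} \<union> Inr ` E2 :: (nat + 'a set) set)"
  define C2 where "C2 = ({Inr {u, Q}, Inr {L, u}} :: (nat + 'a set) set)"
  have M2V2: "M2 \<subseteq> Vs2" using MV u unfolding M2_def Vs2_def by auto
  have finM2: "finite M2" using finM unfolding M2_def by simp
  have RR: "M \<times> {0, 1} = R1 \<union> R2" using L unfolding R1_def R2_def M2_def by auto
  have CC: "Inl ` {0, 1} \<union> Inr ` E = C1 \<union> C2" unfolding C1_def C2_def E2E by auto
  have cC1: "card C1 = card R1"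
    unfolding C1_def R1_def using card_cols[OF finE2] card_rows[OF finM2] cE2 cE cM2 by simp
  have cC2: "card C2 = card R2" unfolding C2_def R2_def using e12 by simp
  have blk: "absdet (R1 \<union> R2) (C1 \<union> C2) (Aent E dir V0) = absdet R1 C1 (Aent E dir V0) * absdet R2 C2 (Aent E dir V0)"
  proof (rule absdet_block)
    show "finite R1" "finite R2" "finite C1" "finite C2"
      unfolding R1_def R2_def C1_def C2_def using finM2 finE2 by auto
    show "R1 \<inter> R2 = {}" unfolding R1_def R2_def M2_def by auto
    show "C1 \<inter> C2 = {}" unfolding C1_def C2_def using nE2 by auto
    show "card C1 = card R1" "card C2 = card R2" by (rule cC1, rule cC2)
    fix r c assume r: "r \<in> R1" and c: "c \<in> C2"
    obtain x i where xi: "r = (x, i)" "x \<in> Vs2" using r M2V2 unfolding R1_def by auto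
    have pth: "is_path E2 (tree_path E2 V0 x) V0 x" by (rule tree_path_is_path[OF t2 V02 xi(2)])
    obtain e where e: "c = Inr e" "e \<notin> E2" using c nE2 unfolding C2_def by auto
    show "Aent E dir V0 r c = 0" using e xi tpx[OF xi(2)] psum_path_zero[OF pth e(2)] by simp
  qed
  have a1: "absdet R1 C1 (Aent E dir V0) = absdet R1 C1 (Aent E2 dir V0)"
  proof (rule absdet_cong)
    show "finite R1" "finite C1" unfolding R1_def C1_def using finM2 finE2 by auto
    show "card C1 = card R1" by (rule cC1)
    fix r c assume r: "r \<in> R1" and c: "c \<in> C1"
    have "fst r \<in> Vs2" using r M2V2 unfolding R1_def by auto
    then show "Aent E dir V0 r c = Aent E2 dir V0 r c" using tpx by (cases c) auto
  qed
  have a2: "absdet R2 C2 (Aent E dir V0) = \<bar>det2 (dir Q u) (dir u L)\<bar>"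
  proof -
    have "absdet R2 C2 (Aent E dir V0) = \<bar>Aent E dir V0 (L, 0) (Inr {u, Q}) * Aent E dir V0 (L, 1) (Inr {L, u})
      - Aent E dir V0 (L, 0) (Inr {L, u}) * Aent E dir V0 (L, 1) (Inr {u, Q})\<bar>"
      unfolding R2_def C2_def by (rule absdet_2) (use e12 in auto)
    also have "\<dots> = \<bar>det2 (dir Q u) (dir u L)\<bar>"
      using ent1[of 0] ent1[of 1] ent2[of 0] ent2[of 1] by (simp add: det2_def algebra_simps)
    finally show ?thesis .
  qed
  have dQu: "dir Q u = - dir u Q" by (rule gs_anti[OF g uQ])
  have Qn: "Q \<in> nbrs E u" "L \<in> nbrs E u" using nu by auto
  have gmu: "\<bar>det2 (dir Q u) (dir u L)\<bar> = gm E dir u"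
    using gm_eq[OF g u Qn QL] dQu det2_neg1 by simp
  have nbo: "nbrs E2 w = nbrs E w" if "w \<noteq> L" "w \<noteq> u" "w \<noteq> Q" for w
    using r(4)[OF that] unfolding E2_def E1_def .
  have nbQ: "nbrs E2 Q = nbrs E Q - {u}" using r(5) unfolding E2_def E1_def .
  have gmeq: "gm E2 dir w = gm E dir w" if w: "w \<in> Vs2 - M2" for w
  proof (cases "w = Q")
    case False
    have "w \<noteq> L" "w \<noteq> u" using w unfolding Vs2_def by auto
    then show ?thesis using nbo[OF _ _ False] unfolding gm_def by simp
  next
    case True
    have QM: "Q \<notin> M" using w True QL unfolding M2_def by auto
    have c3: "card (nbrs E Q) = 3" by (rule r(6)[OF QM])
    have uQn: "u \<in> nbrs E Q" using uQ by (auto simp: nbrs_def insert_commute)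
    have "finite (nbrs E Q)" by (rule nbrs_finite[OF tree_wf[OF t] fin])
    then have "card (nbrs E2 Q) = 2" using c3 uQn nbQ by (simp add: card_Diff_singleton)
    then obtain w1 w2 where ww: "nbrs E2 Q = {w1, w2}" "w1 \<noteq> w2" by (meson card_2_iff)
    have QU2: "Q \<in> Vs2 - M2" using w True by simp
    have QU: "Q \<in> Vs - M" using QV QM by simp
    have "gm E2 dir Q = \<bar>det2 (dir Q w1) (dir Q w2)\<bar>" by (rule gm_eq[OF g2 QU2]) (use ww in auto)
    moreover have "gm E dir Q = \<bar>det2 (dir Q w1) (dir Q w2)\<bar>" by (rule gm_eq[OF g QU]) (use ww nbQ in auto)
    ultimately show ?thesis using True by simp
  qed
  have VsM: "Vs - M = insert u (Vs2 - M2)" "u \<notin> Vs2 - M2"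
    using u L unfolding Vs2_def M2_def by auto
  have finU2: "finite (Vs2 - M2)" using fin unfolding Vs2_def by simp
  have "absdet (M \<times> {0, 1}) (Inl ` {0, 1} \<union> Inr ` E) (Aent E dir V0)
      = absdet R1 C1 (Aent E2 dir V0) * real_of_int (gm E dir u)"
    unfolding RR CC blk a1 a2 gmu by simp
  also have "absdet R1 C1 (Aent E2 dir V0) = (\<Prod>w\<in>Vs2 - M2. real_of_int (gm E2 dir w))"
    using IH unfolding R1_def C1_def E2_def E1_def M2_def Vs2_def by simp
  also have "\<dots> = (\<Prod>w\<in>Vs2 - M2. real_of_int (gm E dir w))" by (rule prod.cong) (auto simp: gmeq)
  finally show ?thesis unfolding VsM(1) using prod.insert[OF finU2 VsM(2), of "\<lambda>w. real_of_int (gm E dir w)"] by simp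
qed

lemma step_cherry:
  assumes g: "gs Vs E dir M" and cE: "card E + 2 = 2 * card M" and V0: "V0 \<in> Vs"
    and u: "u \<in> Vs - M" and L: "L1 \<in> nbrs E u" "L2 \<in> nbrs E u" "L1 \<noteq> L2" "L1 \<in> M" "L2 \<in> M"
    and n1: "nbrs E L1 = {u}" and n2: "nbrs E L2 = {u}" and LV0: "L1 \<noteq> V0" "L2 \<noteq> V0"
    and IH: "absdet ((M - {L1} - {L2} \<union> {u}) \<times> {0, 1}) (Inl ` {0, 1} \<union> Inr ` (E - {{L1, u}} - {{L2, u}}))
        (Aent (E - {{L1, u}} - {{L2, u}}) dir V0)
      = (\<Prod>w\<in>Vs - {L1} - {L2} - (M - {L1} - {L2} \<union> {u}). real_of_int (gm (E - {{L1, u}} - {{L2, u}}) dir w))"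
  shows "absdet (M \<times> {0, 1}) (Inl ` {0, 1} \<union> Inr ` E) (Aent E dir V0)
      = (\<Prod>w\<in>Vs - M. real_of_int (gm E dir w))"
proof -
  define E1 where "E1 = E - {{L1, u}}"
  define E2 where "E2 = E1 - {{L2, u}}"
  define M2 where "M2 = M - {L1} - {L2} \<union> {u}"
  define Vs2 where "Vs2 = Vs - {L1} - {L2}"
  note r = redCh_gs[OF g u L n1 n2]
  have t: "is_tree Vs E" by (rule gs_tree[OF g])
  have MV: "M \<subseteq> Vs" by (rule gs_MV[OF g])
  have fin: "finite Vs" using t by (simp add: is_tree_def)
  have finM: "finite M" using MV fin finite_subset by blast
  have finE: "finite E" by (rule tree_finite_E[OF t])
  have t1: "is_tree (Vs - {L1}) E1" unfolding E1_def by (rule r(1))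
  have n2': "nbrs E1 L2 = {u}" unfolding E1_def by (rule r(2))
  have g2: "gs Vs2 E2 dir M2" unfolding Vs2_def E2_def E1_def M2_def by (rule r(3))
  have t2: "is_tree Vs2 E2" by (rule gs_tree[OF g2])
  have LV: "L1 \<in> Vs" "L2 \<in> Vs" using L MV by auto
  have e1: "{L1, u} \<in> E" using n1 by (auto simp: nbrs_def)
  have e2: "{L2, u} \<in> E" using n2 by (auto simp: nbrs_def)
  have uL: "u \<noteq> L1" "u \<noteq> L2" using u L by auto
  have uV2: "u \<in> Vs2" using u uL unfolding Vs2_def by auto
  have V02: "V0 \<in> Vs2" using V0 LV0 unfolding Vs2_def by auto
  have e12: "{L1, u} \<noteq> {L2, u}" using L uL by (auto simp: doubleton_eq_iff)
  have E2E: "E = E2 \<union> {{L1, u}, {L2, u}}" using e1 e2 unfolding E2_def E1_def by auto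
  have nE2: "{L1, u} \<notin> E2" "{L2, u} \<notin> E2" unfolding E2_def E1_def by auto
  have finE2: "finite E2" using finE unfolding E2_def E1_def by simp
  have cE2: "card E2 + 2 = card E"
  proof -
    have "card E1 = card E - 1" using e1 finE unfolding E1_def by simp
    moreover have "card E2 = card E1 - 1" using e2 e12 finE unfolding E2_def E1_def by simp
    moreover have "card E \<ge> 2"
    proof -
      have "{{L1, u}, {L2, u}} \<subseteq> E" using e1 e2 by auto
      then show ?thesis using card_mono[OF finE, of "{{L1, u}, {L2, u}}"] e12 by simp
    qed
    ultimately show ?thesis by simp
  qed
  have cM2: "card M2 + 1 = card M"
  proof -
    have "Suc (card (M - {L1})) = card M" by (rule card_Suc_Diff1[OF finM L(4)])
    moreover have "Suc (card (M - {L1} - {L2})) = card (M - {L1})"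
      by (rule card_Suc_Diff1) (use finM L in auto)
    moreover have "card M2 = Suc (card (M - {L1} - {L2}))"
      unfolding M2_def using finM u by (subst card_Un_disjoint) auto
    ultimately show ?thesis by simp
  qed
  have tpx: "tree_path E V0 x = tree_path E2 V0 x" if x: "x \<in> Vs2" for x
  proof -
    have "tree_path E1 V0 x = tree_path E V0 x"
      unfolding E1_def by (rule tree_path_remove[OF t LV(1) n1]) (use x V0 LV0 in \<open>auto simp: Vs2_def\<close>)
    moreover have "tree_path E2 V0 x = tree_path E1 V0 x"
      unfolding E2_def by (rule tree_path_remove[OF t1 _ n2']) (use x V02 L LV in \<open>auto simp: Vs2_def\<close>)
    ultimately show ?thesis by simp
  qed
  define p where "p = tree_path E2 V0 u"
  have pp: "is_path E2 p V0 u" unfolding p_def by (rule tree_path_is_path[OF t2 V02 uV2])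
  have tp1: "tree_path E V0 L1 = p @ [L1]"
  proof -
    have "tree_path E V0 L1 = tree_path E1 V0 u @ [L1]"
      unfolding E1_def by (rule tree_path_remove_leaf[OF t LV(1) n1]) (use V0 LV0 in auto)
    moreover have "tree_path E1 V0 u = p" using tpx[OF uV2] p_def
      tree_path_remove[OF t LV(1) n1, of V0 u] V0 LV0 u uL unfolding E1_def by auto
    ultimately show ?thesis by simp
  qed
  have tp2: "tree_path E V0 L2 = p @ [L2]"
  proof -
    have "tree_path E1 V0 L2 = tree_path E V0 L2"
      unfolding E1_def by (rule tree_path_remove[OF t LV(1) n1]) (use V0 LV0 L LV in auto)
    moreover have "tree_path E1 V0 L2 = tree_path E2 V0 u @ [L2]"
      unfolding E2_def by (rule tree_path_remove_leaf[OF t1 _ n2']) (use V0 LV0 L LV in auto)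
    ultimately show ?thesis unfolding p_def by simp
  qed
  have ent1: "psum dir (tree_path E V0 L1) e c = psum dir p e c + (if {u, L1} = e then comp2 c (dir u L1) else 0)" for e c
    unfolding tp1 using psum_snoc[of p dir L1 e c] pp by (simp add: is_path_def)
  have ent2: "psum dir (tree_path E V0 L2) e c = psum dir p e c + (if {u, L2} = e then comp2 c (dir u L2) else 0)" for e c
    unfolding tp2 using psum_snoc[of p dir L2 e c] pp by (simp add: is_path_def)
  have p0: "psum dir p e c = 0" if "e \<notin> E2" for e c by (rule psum_path_zero[OF pp that])
  define A0 where "A0 = Aent E dir V0"
  define A1 where "A1 = (\<lambda>r cl. if r = (L2, 0::nat) then A0 (L2, 0) cl + (- 1) * A0 (L1, 0) cl else A0 r cl)"
  define A2 where "A2 = (\<lambda>r cl. if r = (L2, 1::nat) then A1 (L2, 1) cl + (- 1) * A1 (L1, 1) cl else A1 r cl)"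
  define B where "B = (\<lambda>r cl. if fst r = L2 then A0 r cl - A0 (L1, snd r) cl else A0 r cl)"
  define R where "R = M \<times> {0, 1::nat}"
  define C where "C = (Inl ` {0, 1::nat} \<union> Inr ` E :: (nat + 'a set) set)"
  have finR: "finite R" "finite C" unfolding R_def C_def using finM finE by auto
  have cC: "card C = card R" unfolding C_def R_def using card_cols[OF finE] card_rows[OF finM] cE by simp
  have s1: "absdet R C A1 = absdet R C A0" unfolding A1_def
    by (rule absdet_addrow[OF finR(1) finR(2) cC]) (use L in \<open>auto simp: R_def\<close>)
  have s2: "absdet R C A2 = absdet R C A1" unfolding A2_def
    by (rule absdet_addrow[OF finR(1) finR(2) cC]) (use L in \<open>auto simp: R_def\<close>)
  have s3: "absdet R C B = absdet R C A2"
  proof (rule absdet_cong[OF finR(1) cC finR(2)])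
    fix r cl assume r: "r \<in> R" "cl \<in> C"
    show "B r cl = A2 r cl" using r L(3) unfolding B_def A2_def A1_def R_def by auto
  qed
  define R1 where "R1 = {(L2, 0::nat), (L2, 1)}"
  define C1 where "C1 = ({Inr {L1, u}, Inr {L2, u}} :: (nat + 'a set) set)"
  define R2 where "R2 = (M - {L2}) \<times> {0, 1::nat}"
  define C2 where "C2 = (Inl ` {0, 1::nat} \<union> Inr ` E2 :: (nat + 'a set) set)"
  have finM2: "finite (M - {L2})" using finM by simp
  have RR: "R = R1 \<union> R2" using L unfolding R_def R1_def R2_def by auto
  have CC: "C = C1 \<union> C2" unfolding C_def C1_def C2_def E2E by auto
  have cC2: "card C2 = card R2"
  proof -
    have "card (M - {L2}) + 1 = card M" using card_Suc_Diff1[OF finM L(5)] by simp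
    then show ?thesis unfolding C2_def R2_def using card_cols[OF finE2] card_rows[OF finM2] cE2 cE by simp
  qed
  have cC1: "card C1 = card R1" unfolding C1_def R1_def using e12 by simp
  have blk: "absdet (R1 \<union> R2) (C1 \<union> C2) B = absdet R1 C1 B * absdet R2 C2 B"
  proof (rule absdet_block)
    show "finite R1" "finite R2" "finite C1" "finite C2"
      unfolding R1_def R2_def C1_def C2_def using finM2 finE2 by auto
    show "R1 \<inter> R2 = {}" unfolding R1_def R2_def by auto
    show "C1 \<inter> C2 = {}" unfolding C1_def C2_def using nE2 by auto
    show "card C1 = card R1" "card C2 = card R2" by (rule cC1, rule cC2)
    fix r cl assume r: "r \<in> R1" and c: "cl \<in> C2"
    show "B r cl = 0"
    proof (cases cl)
      case (Inl j)
      then show ?thesis using r unfolding B_def A0_def R1_def by auto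
    next
      case (Inr e)
      then have eE: "e \<in> E2" using c unfolding C2_def by auto
      then have "{u, L1} \<noteq> e" "{u, L2} \<noteq> e" using nE2 by (auto simp: insert_commute)
      then show ?thesis using r Inr ent1[of e] ent2[of e] unfolding B_def A0_def R1_def by auto
    qed
  qed
  have a1: "absdet R1 C1 B = \<bar>det2 (dir u L1) (dir u L2)\<bar>"
  proof -
    have z1: "psum dir p {L1, u} c = 0" "psum dir p {L2, u} c = 0" for c using p0 nE2 by auto
    have "absdet R1 C1 B = \<bar>B (L2, 0) (Inr {L1, u}) * B (L2, 1) (Inr {L2, u})
      - B (L2, 0) (Inr {L2, u}) * B (L2, 1) (Inr {L1, u})\<bar>"
      unfolding R1_def C1_def by (rule absdet_2) (use e12 in auto)
    also have "\<dots> = \<bar>det2 (dir u L1) (dir u L2)\<bar>"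
      unfolding B_def A0_def using ent1[of "{L1, u}"] ent2[of "{L1, u}"] ent1[of "{L2, u}"] ent2[of "{L2, u}"]
        z1 e12 L(3) uL by (simp add: det2_def insert_commute algebra_simps doubleton_eq_iff)
    finally show ?thesis .
  qed
  have a2: "absdet R2 C2 B = absdet R2 C2 A0"
  proof (rule absdet_cong)
    show "finite R2" "finite C2" unfolding R2_def C2_def using finM2 finE2 by auto
    show "card C2 = card R2" by (rule cC2)
    fix r cl assume "r \<in> R2" "cl \<in> C2"
    then show "B r cl = A0 r cl" unfolding B_def R2_def by auto
  qed
  define h where "h = (\<lambda>(x::'a, c::nat). (if x = L1 then u else x, c))"
  have injh: "inj_on h R2" unfolding h_def R2_def inj_on_def using u L by auto
  have hR2: "h ` R2 = M2 \<times> {0, 1::nat}"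
  proof
    show "h ` R2 \<subseteq> M2 \<times> {0, 1::nat}" unfolding h_def R2_def M2_def using uL by (auto split: if_splits)
    show "M2 \<times> {0, 1::nat} \<subseteq> h ` R2"
    proof
      fix y assume y: "y \<in> M2 \<times> {0, 1::nat}"
      then obtain x c where xc: "y = (x, c)" "x \<in> M2" "c \<in> {0, 1}" by auto
      show "y \<in> h ` R2"
      proof (cases "x = u")
        case True
        then show ?thesis using xc L uL unfolding h_def R2_def by (intro image_eqI[of _ _ "(L1, c)"]) auto
      next
        case False
        then show ?thesis using xc L uL unfolding h_def R2_def M2_def by (intro image_eqI[of _ _ "(x, c)"]) auto
      qed
    qed
  qed
  have a3: "absdet (h ` R2) C2 (Aent E2 dir V0) = absdet R2 C2 A0"
  proof (rule absdet_relabel[OF _ _ cC2 injh])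
    show "finite R2" "finite C2" unfolding R2_def C2_def using finM2 finE2 by auto
    fix r cl assume r: "r \<in> R2" and c: "cl \<in> C2"
    obtain x i where xi: "r = (x, i)" "x \<in> M - {L2}" using r unfolding R2_def by auto
    show "Aent E2 dir V0 (h r) cl = A0 r cl"
    proof (cases cl)
      case (Inl j)
      then show ?thesis unfolding A0_def h_def xi by simp
    next
      case (Inr e)
      then have eE: "e \<in> E2" using c unfolding C2_def by auto
      show ?thesis
      proof (cases "x = L1")
        case True
        have "{u, L1} \<noteq> e" using eE nE2 by (auto simp: insert_commute)
        then show ?thesis using Inr True ent1[of e i] unfolding A0_def h_def xi p_def by simp
      next
        case False
        have "x \<in> Vs2" using xi False MV unfolding Vs2_def by auto
        then show ?thesis using Inr False tpx unfolding A0_def h_def xi by simp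
      qed
    qed
  qed
  have gmeq: "gm E2 dir w = gm E dir w" if w: "w \<in> Vs2 - M2" for w
  proof -
    have "w \<noteq> L1" "w \<noteq> L2" "w \<noteq> u" using w unfolding Vs2_def M2_def by auto
    then have "nbrs E2 w = nbrs E w" unfolding E2_def E1_def by (simp add: nbrs_remove_other)
    then show ?thesis unfolding gm_def by simp
  qed
  have VsM: "Vs - M = insert u (Vs2 - M2)" "u \<notin> Vs2 - M2"
    using u L unfolding Vs2_def M2_def by auto
  have finU2: "finite (Vs2 - M2)" using fin unfolding Vs2_def by simp
  have gmu: "\<bar>det2 (dir u L1) (dir u L2)\<bar> = gm E dir u" using gm_eq[OF g u L(1-3)] by simp
  have "absdet (M \<times> {0, 1}) (Inl ` {0, 1} \<union> Inr ` E) (Aent E dir V0) = absdet R C B"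
    using s1 s2 s3 unfolding R_def C_def A0_def by simp
  also have "\<dots> = real_of_int (gm E dir u) * absdet (h ` R2) C2 (Aent E2 dir V0)"
    unfolding RR CC blk a1 a2 a3[symmetric] gmu by simp
  also have "absdet (h ` R2) C2 (Aent E2 dir V0) = (\<Prod>w\<in>Vs2 - M2. real_of_int (gm E2 dir w))"
    using IH unfolding hR2 C2_def E2_def E1_def M2_def Vs2_def by simp
  also have "\<dots> = (\<Prod>w\<in>Vs2 - M2. real_of_int (gm E dir w))" by (rule prod.cong) (auto simp: gmeq)
  finally show ?thesis unfolding VsM(1)
    using prod.insert[OF finU2 VsM(2), of "\<lambda>w. real_of_int (gm E dir w)"] by simp
qed

lemma abs_main_aux:
  assumes "card Vs = n" "gs Vs E dir M" "card E + 2 = 2 * card M" "V0 \<in> Vs"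
  shows "absdet (M \<times> {0, 1}) (Inl ` {0, 1} \<union> Inr ` E) (Aent E dir V0)
      = (\<Prod>w\<in>Vs - M. real_of_int (gm E dir w))"
  using assms
proof (induction n arbitrary: Vs E M rule: less_induct)
  case (less n)
  note g = less.prems(2) and cE = less.prems(3) and V0 = less.prems(4)
  have t: "is_tree Vs E" by (rule gs_tree[OF g])
  have MV: "M \<subseteq> Vs" by (rule gs_MV[OF g])
  have fin: "finite Vs" and ne: "Vs \<noteq> {}" using t by (auto simp: is_tree_def)
  have finM: "finite M" using MV fin finite_subset by blast
  have finE: "finite E" by (rule tree_finite_E[OF t])
  have cVE: "card E + 1 = card Vs" using t by (simp add: is_tree_def)
  show ?case
  proof (cases "card Vs \<ge> 2")
    case False
    then have "card Vs = 1" using ne fin by (metis One_nat_def card_gt_0_iff less_2_cases not_le zero_less_iff_neq_zero)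
    then obtain v where Vv: "Vs = {v}" by (auto simp: card_1_singleton_iff)
    have "card E = 0" using cVE \<open>card Vs = 1\<close> by simp
    then have E0: "E = {}" using finE by simp
    have vM: "v \<in> M"
    proof (rule ccontr)
      assume "v \<notin> M"
      then have d: "card (nbrs E v) = 2 \<or> card (nbrs E v) = 3" using gs_deg[OF g] Vv by auto
      then show False using E0 by (simp add: nbrs_def)
    qed
    then have Mv: "M = {v}" using MV Vv by auto
    have "absdet (M \<times> {0, 1}) (Inl ` {0, 1} \<union> Inr ` E) (Aent E dir V0)
        = absdet {(v, 0), (v, 1)} {Inl 0, Inl 1} (Aent E dir V0)"
      unfolding Mv E0 by (simp add: insert_commute)
    also have "\<dots> = 1" by (subst absdet_2) auto
    finally show ?thesis using Vv Mv by simp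
  next
    case True
    have cn: "\<And>X. X \<subseteq> Vs \<Longrightarrow> X \<noteq> Vs \<Longrightarrow> card X < n"
      using less.prems(1) fin by (metis psubsetI psubset_card_mono)
    note fr = find_red[OF g V0 True]
    show ?thesis
    proof (cases "\<exists>L P. L \<in> M \<and> nbrs E L = {P} \<and> P \<in> M \<and> L \<noteq> V0")
      case True
      then obtain L P where h: "L \<in> M" "nbrs E L = {P}" "P \<in> M" by blast
      have g': "gs (Vs - {L}) (E - {{L, P}}) dir (M - {L})" by (rule red0_gs[OF g h])
      have cb: "card (Vs - {L} - (M - {L})) + 1 \<le> card (M - {L})" by (rule count_bound[OF g'])
      have "Vs - {L} - (M - {L}) = Vs - M" using h by auto
      moreover have "card (M - {L}) + 1 = card M" using card_Suc_Diff1[OF finM h(1)] by simp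
      moreover have "card (Vs - M) + card M = card Vs" using MV fin by (metis card_Diff_subset card_mono le_add_diff_inverse2 finM)
      ultimately show ?thesis using cb cE cVE by simp
    next
      case False
      then have fr2: "(\<exists>u L Q. u \<in> Vs - M \<and> nbrs E u = {L, Q} \<and> L \<noteq> Q \<and> L \<in> M \<and> nbrs E L = {u} \<and> L \<noteq> V0 \<and> u \<noteq> V0)
        \<or> (\<exists>u L1 L2. u \<in> Vs - M \<and> L1 \<in> nbrs E u \<and> L2 \<in> nbrs E u \<and> L1 \<noteq> L2 \<and> L1 \<in> M \<and> L2 \<in> M \<and>
         nbrs E L1 = {u} \<and> nbrs E L2 = {u} \<and> L1 \<noteq> V0 \<and> L2 \<noteq> V0)" using fr by blast
      show ?thesis
      proof (cases "\<exists>u L Q. u \<in> Vs - M \<and> nbrs E u = {L, Q} \<and> L \<noteq> Q \<and> L \<in> M \<and> nbrs E L = {u} \<and> L \<noteq> V0 \<and> u \<noteq> V0")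
        case True
        then obtain u L Q where h: "u \<in> Vs - M" "nbrs E u = {L, Q}" "L \<noteq> Q" "L \<in> M" "nbrs E L = {u}"
          "L \<noteq> V0" "u \<noteq> V0" by blast
        note r = redEnd_gs[OF g h(1-5)]
        have Lu: "{L, u} \<in> E" using h(5) by (auto simp: nbrs_def)
        have uQ: "{u, Q} \<in> E" using h(2) by (auto simp: nbrs_def)
        have QL: "Q \<noteq> L" "u \<noteq> L" using h by auto
        have e12: "{u, Q} \<noteq> {L, u}" using QL by (auto simp: doubleton_eq_iff)
        have cE2: "card (E - {{L, u}} - {{u, Q}}) + 2 = card E"
        proof -
          have "card (E - {{L, u}}) = card E - 1" using Lu finE by simp
          moreover have "card (E - {{L, u}} - {{u, Q}}) = card (E - {{L, u}}) - 1" using uQ e12 finE by simp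
          moreover have "card E \<ge> 2"
          proof -
            have "{{u, Q}, {L, u}} \<subseteq> E" using Lu uQ by auto
            then show ?thesis using card_mono[OF finE, of "{{u, Q}, {L, u}}"] e12 by simp
          qed
          ultimately show ?thesis by simp
        qed
        have cM2: "card (M - {L}) + 1 = card M" using card_Suc_Diff1[OF finM h(4)] by simp
        have "card (Vs - {L} - {u}) < n" using cn[of "Vs - {L} - {u}"] h MV by auto
        moreover have "card (E - {{L, u}} - {{u, Q}}) + 2 = 2 * card (M - {L})" using cE2 cE cM2 by simp
        moreover have "V0 \<in> Vs - {L} - {u}" using V0 h by auto
        ultimately have IH: "absdet ((M - {L}) \<times> {0, 1}) (Inl ` {0, 1} \<union> Inr ` (E - {{L, u}} - {{u, Q}}))
            (Aent (E - {{L, u}} - {{u, Q}}) dir V0)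
          = (\<Prod>w\<in>Vs - {L} - {u} - (M - {L}). real_of_int (gm (E - {{L, u}} - {{u, Q}}) dir w))"
          using less.IH[OF _ refl r(3)] by simp
        show ?thesis by (rule step_end[OF g cE V0 h IH])
      next
        case False
        then obtain u L1 L2 where h: "u \<in> Vs - M" "L1 \<in> nbrs E u" "L2 \<in> nbrs E u" "L1 \<noteq> L2" "L1 \<in> M" "L2 \<in> M"
          "nbrs E L1 = {u}" "nbrs E L2 = {u}" "L1 \<noteq> V0" "L2 \<noteq> V0" using fr2 by blast
        note r = redCh_gs[OF g h(1-8)]
        have e1: "{L1, u} \<in> E" using h(7) by (auto simp: nbrs_def)
        have e2: "{L2, u} \<in> E" using h(8) by (auto simp: nbrs_def)
        have e12: "{L1, u} \<noteq> {L2, u}" using h by (auto simp: doubleton_eq_iff)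
        have cE2: "card (E - {{L1, u}} - {{L2, u}}) + 2 = card E"
        proof -
          have "card (E - {{L1, u}}) = card E - 1" using e1 finE by simp
          moreover have "card (E - {{L1, u}} - {{L2, u}}) = card (E - {{L1, u}}) - 1" using e2 e12 finE by simp
          moreover have "card E \<ge> 2"
          proof -
            have "{{L1, u}, {L2, u}} \<subseteq> E" using e1 e2 by auto
            then show ?thesis using card_mono[OF finE, of "{{L1, u}, {L2, u}}"] e12 by simp
          qed
          ultimately show ?thesis by simp
        qed
        have cM2: "card (M - {L1} - {L2} \<union> {u}) + 1 = card M"
        proof -
          have "Suc (card (M - {L1})) = card M" by (rule card_Suc_Diff1[OF finM h(5)])
          moreover have "Suc (card (M - {L1} - {L2})) = card (M - {L1})"
            by (rule card_Suc_Diff1) (use finM h in auto)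
          moreover have "card (M - {L1} - {L2} \<union> {u}) = Suc (card (M - {L1} - {L2}))"
            using finM h by (subst card_Un_disjoint) auto
          ultimately show ?thesis by simp
        qed
        have "card (Vs - {L1} - {L2}) < n" using cn[of "Vs - {L1} - {L2}"] h MV by auto
        moreover have "card (E - {{L1, u}} - {{L2, u}}) + 2 = 2 * card (M - {L1} - {L2} \<union> {u})"
          using cE2 cE cM2 by simp
        ultimately have IH: "absdet ((M - {L1} - {L2} \<union> {u}) \<times> {0, 1}) (Inl ` {0, 1} \<union> Inr ` (E - {{L1, u}} - {{L2, u}}))
            (Aent (E - {{L1, u}} - {{L2, u}}) dir V0)
          = (\<Prod>w\<in>Vs - {L1} - {L2} - (M - {L1} - {L2} \<union> {u}). real_of_int (gm (E - {{L1, u}} - {{L2, u}}) dir w))"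
          using less.IH[OF _ refl r(3)] V0 h by simp
        show ?thesis by (rule step_cherry[OF g cE V0 h IH])
      qed
    qed
  qed
qed

theorem abs_main:
  assumes "gs Vs E dir M" "card E + 2 = 2 * card M" "V0 \<in> Vs"
  shows "absdet (M \<times> {0, 1}) (Inl ` {0, 1} \<union> Inr ` E) (Aent E dir V0)
      = (\<Prod>w\<in>Vs - M. real_of_int (gm E dir w))"
  by (rule abs_main_aux[OF refl assms])

lemma fiber_sum:
  assumes "finite T" "\<And>i. i < N \<Longrightarrow> g i \<in> T"
  shows "(\<Sum>v\<in>T. card {i. i < N \<and> g i = v}) = N"
proof -
  have "(\<Sum>v\<in>T. \<Sum>i\<in>{x. x \<in> {..<N} \<and> g x = v}. (1::nat)) = (\<Sum>i\<in>{..<N}. 1)"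
    by (rule sum.group) (use assms in auto)
  then show ?thesis by simp
qed

lemma lab_count:
  assumes d1: "d \<ge> 1" and n1: "n \<ge> 1"
    and rr: "3 * d - 1 = n + (\<Sum>k<n. r k)"
    and lab: "is_lab_curve d n Vs E dir endv enddir mk len"
    and inj: "inj_on mk {..<n}"
    and vm: "\<forall>k<n. valence d n E endv mk (mk k) = r k + 3"
    and vu: "\<forall>v\<in>Vs. v \<notin> mk ` {..<n} \<longrightarrow> valence d n E endv mk v = 3"
  shows "card E + 2 = 2 * n"
proof -
  have t: "is_tree Vs E" using lab by (simp add: is_lab_curve_def)
  have fin: "finite Vs" using t by (simp add: is_tree_def)
  have wf: "wf_edges Vs E" by (rule tree_wf[OF t])
  have cVE: "card E + 1 = card Vs" using t by (simp add: is_tree_def)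
  have eV: "\<And>i. i < 3 * d \<Longrightarrow> endv i \<in> Vs" using lab by (simp add: is_lab_curve_def)
  have mV: "\<And>k. k < n \<Longrightarrow> mk k \<in> Vs" using lab by (simp add: is_lab_curve_def)
  define M where "M = mk ` {..<n}"
  have MV: "M \<subseteq> Vs" using mV unfolding M_def by auto
  have cM: "card M = n" unfolding M_def using card_image[OF inj] by simp
  have "(\<Sum>v\<in>Vs. valence d n E endv mk v) = 2 * card E + 3 * d + n"
    unfolding valence_def sum.distrib handshake[OF fin wf] using fiber_sum[OF fin eV] fiber_sum[OF fin mV] by simp
  moreover have "(\<Sum>v\<in>Vs. valence d n E endv mk v) = (\<Sum>v\<in>M. valence d n E endv mk v) + (\<Sum>v\<in>Vs - M. valence d n E endv mk v)"
    using fin MV by (metis sum.subset_diff add.commute)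
  moreover have "(\<Sum>v\<in>M. valence d n E endv mk v) = (\<Sum>k<n. r k + 3)"
    unfolding M_def using sum.reindex[OF inj, of "valence d n E endv mk"] vm by simp
  moreover have "(\<Sum>v\<in>Vs - M. valence d n E endv mk v) = 3 * card (Vs - M)"
    using vu unfolding M_def by simp
  moreover have "card (Vs - M) + n = card Vs" using card_Diff_subset[OF finite_subset[OF MV fin] MV] card_mono[OF fin MV] cM by simp
  moreover have "(\<Sum>k<n. r k + 3) = (\<Sum>k<n. r k) + 3 * n" by (simp add: sum.distrib)
  ultimately show ?thesis using rr d1 cVE by linarith
qed

lemma ends_at_le1:
  assumes lab: "is_lab_curve d n Vs E dir endv enddir mk len"
    and ns: "\<not> has_string d n E endv mk" and v: "v \<in> Vs" "v \<notin> mk ` {..<n}"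
  shows "card {i. i < 3 * d \<and> endv i = v} \<le> 1"
proof (rule ccontr)
  assume "\<not> ?thesis"
  then have "\<not> card {i. i < 3 * d \<and> endv i = v} \<le> Suc 0" by simp
  then have "\<not> (\<forall>x\<in>{i. i < 3 * d \<and> endv i = v}. \<forall>y\<in>{i. i < 3 * d \<and> endv i = v}. x = y)"
    using card_le_Suc0_iff_eq[of "{i. i < 3 * d \<and> endv i = v}"] by simp
  then obtain i j where ij: "i \<in> {i. i < 3 * d \<and> endv i = v}" "j \<in> {i. i < 3 * d \<and> endv i = v}" "i \<noteq> j"
    by blast
  have "is_path E [v] (endv i) (endv j)" using ij by simp
  moreover have "\<forall>x\<in>set [v]. x \<notin> mk ` {..<n}" using v by simp
  ultimately have "has_string d n E endv mk" unfolding has_string_def using ij by blast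
  then show False using ns by simp
qed

lemma lab_gs:
  assumes lab: "is_lab_curve d n Vs E dir endv enddir mk len"
    and vu: "\<forall>v\<in>Vs. v \<notin> mk ` {..<n} \<longrightarrow> valence d n E endv mk v = 3"
    and ns: "\<not> has_string d n E endv mk"
  shows "gs Vs E dir (mk ` {..<n})"
  unfolding gs_def
proof (intro conjI allI impI ballI)
  show t: "is_tree Vs E" using lab by (simp add: is_lab_curve_def)
  show "mk ` {..<n} \<subseteq> Vs" using lab by (auto simp: is_lab_curve_def)
  show "dir w u = - dir u w" if "{u, w} \<in> E" for u w using lab that by (simp add: is_lab_curve_def)
  fix u assume u: "u \<in> Vs - mk ` {..<n}"
  have nomk: "{k. k < n \<and> mk k = u} = {}" using u by auto
  have "valence d n E endv mk u = 3" using vu u by auto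
  then have val: "card (nbrs E u) + card {i. i < 3 * d \<and> endv i = u} = 3"
    unfolding valence_def nomk by simp
  have le1: "card {i. i < 3 * d \<and> endv i = u} \<le> 1" using ends_at_le1[OF lab ns] u by auto
  show "card (nbrs E u) = 2 \<or> card (nbrs E u) = 3" using val le1 by linarith
  assume c3: "card (nbrs E u) = 3"
  then have "card {i. i < 3 * d \<and> endv i = u} = 0" using val by simp
  then have e0: "{i. i < 3 * d \<and> endv i = u} = {}" by simp
  have "(\<Sum>w\<in>nbrs E u. dir u w) + (\<Sum>i\<in>{i. i < 3 * d \<and> endv i = u}. enddir i) = 0"
    using lab u by (simp add: is_lab_curve_def)
  then show "(\<Sum>w\<in>nbrs E u. dir u w) = 0" using e0 by simp
next
  fix a b ps
  assume h: "a \<in> Vs - mk ` {..<n} \<and> b \<in> Vs - mk ` {..<n} \<and> a \<noteq> b \<and> card (nbrs E a) = 2 \<and>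
    card (nbrs E b) = 2 \<and> is_path E ps a b"
  have one: "\<exists>i. i < 3 * d \<and> endv i = x" if x: "x \<in> Vs - mk ` {..<n}" "card (nbrs E x) = 2" for x
  proof -
    have nomk: "{k. k < n \<and> mk k = x} = {}" using x by auto
    have "valence d n E endv mk x = 3" using vu x by auto
    then have "card (nbrs E x) + card {i. i < 3 * d \<and> endv i = x} = 3"
      unfolding valence_def nomk by simp
    then have "card {i. i < 3 * d \<and> endv i = x} = 1" using x by simp
    then show ?thesis by (metis (mono_tags, lifting) One_nat_def card_1_singleton_iff mem_Collect_eq singletonI)
  qed
  obtain i where i: "i < 3 * d" "endv i = a" using one h by blast
  obtain j where j: "j < 3 * d" "endv j = b" using one h by blast
  show "\<not> set ps \<subseteq> Vs - mk ` {..<n}"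
  proof
    assume S: "set ps \<subseteq> Vs - mk ` {..<n}"
    have "i \<noteq> j" using i j h by auto
    moreover have "is_path E ps (endv i) (endv j)" using i j h by simp
    moreover have "\<forall>x\<in>set ps. x \<notin> mk ` {..<n}" using S by auto
    ultimately have "has_string d n E endv mk" unfolding has_string_def using i j by blast
    then show False using ns by simp
  qed
qed

lemma vm_eq:
  assumes lab: "is_lab_curve d n Vs E dir endv enddir mk len"
    and vu: "\<forall>v\<in>Vs. v \<notin> mk ` {..<n} \<longrightarrow> valence d n E endv mk v = 3"
    and ns: "\<not> has_string d n E endv mk"
    and v: "v \<in> Vs - mk ` {..<n}"
  shows "vertex_mult d E dir endv enddir v = gm E dir v"
proof -
  have g: "gs Vs E dir (mk ` {..<n})" by (rule lab_gs[OF lab vu ns])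
  have t: "is_tree Vs E" by (rule gs_tree[OF g])
  have fin: "finite Vs" using t by (simp add: is_tree_def)
  have finN: "finite (nbrs E v)" by (rule nbrs_finite[OF tree_wf[OF t] fin])
  define EN where "EN = {i. i < 3 * d \<and> endv i = v}"
  have finEN: "finite EN" unfolding EN_def by simp
  let ?S = "adj_edges d E endv v"
  have S: "?S = Inl ` nbrs E v \<union> Inr ` EN" unfolding adj_edges_def EN_def ..
  have finS: "finite ?S" unfolding S using finN finEN by simp
  have nomk: "{k. k < n \<and> mk k = v} = {}" using v by auto
  have "valence d n E endv mk v = 3" using vu v by auto
  then have val: "card (nbrs E v) + card EN = 3" unfolding valence_def EN_def nomk by simp
  have cS: "card ?S = 3"
  proof -
    have "card ?S = card (Inl ` nbrs E v :: ('a + nat) set) + card (Inr ` EN :: ('a + nat) set)"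
      unfolding S using finN finEN by (intro card_Un_disjoint) auto
    also have "\<dots> = card (nbrs E v) + card EN" by (simp add: card_image)
    finally show ?thesis using val by simp
  qed
  have bal: "(\<Sum>x\<in>?S. out_dir dir enddir v x) = 0"
  proof -
    have "(\<Sum>x\<in>?S. out_dir dir enddir v x) = (\<Sum>x\<in>Inl ` nbrs E v. out_dir dir enddir v x) + (\<Sum>x\<in>Inr ` EN. out_dir dir enddir v x)"
      unfolding S using finN finEN by (intro sum.union_disjoint) auto
    also have "\<dots> = (\<Sum>w\<in>nbrs E v. dir v w) + (\<Sum>i\<in>EN. enddir i)"
      by (simp add: sum.reindex out_dir_def)
    also have "\<dots> = 0" using lab v unfolding EN_def by (simp add: is_lab_curve_def)
    finally show ?thesis .
  qed
  have deg: "card (nbrs E v) = 2 \<or> card (nbrs E v) = 3" using gs_deg[OF g v] .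
  obtain w1 w2 where w: "w1 \<in> nbrs E v" "w2 \<in> nbrs E v" "w1 \<noteq> w2"
  proof -
    have "card (nbrs E v) \<ge> 2" using deg by auto
    then have "\<not> card (nbrs E v) \<le> Suc 0" by simp
    then have "\<not> (\<forall>x\<in>nbrs E v. \<forall>y\<in>nbrs E v. x = y)"
      using card_le_Suc0_iff_eq[OF finN] by simp
    then show ?thesis using that by blast
  qed
  have ex: "\<exists>m. \<exists>a\<in>?S. \<exists>b\<in>?S. a \<noteq> b \<and> m = \<bar>det2 (out_dir dir enddir v a) (out_dir dir enddir v b)\<bar>"
    using w unfolding S by blast
  obtain a b where ab: "a \<in> ?S" "b \<in> ?S" "a \<noteq> b"
    "vertex_mult d E dir endv enddir v = \<bar>det2 (out_dir dir enddir v a) (out_dir dir enddir v b)\<bar>"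
    using someI_ex[OF ex] unfolding vertex_mult_def by blast
  have wS: "Inl w1 \<in> ?S" "Inl w2 \<in> ?S" "(Inl w1 :: 'a + nat) \<noteq> Inl w2" using w unfolding S by auto
  have "\<bar>det2 (out_dir dir enddir v a) (out_dir dir enddir v b)\<bar>
      = \<bar>det2 (out_dir dir enddir v (Inl w1)) (out_dir dir enddir v (Inl w2))\<bar>"
    by (rule pair_det_const[OF finS _ _ wS ab(1-3)]) (use cS bal in auto)
  also have "\<dots> = \<bar>det2 (dir v w1) (dir v w2)\<bar>" by (simp add: out_dir_def)
  also have "\<dots> = gm E dir v" using gm_eq[OF g v w] by simp
  finally show ?thesis using ab(4) by simp
qed

lemma ev_absdet:
  assumes t: "is_tree Vs E" and inj: "inj_on mk {..<n}" and mV: "\<And>k. k < n \<Longrightarrow> mk k \<in> Vs"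
    and cE: "card E + 2 = 2 * n" and eo: "bij_betw eo {..<card E} E"
  shows "\<bar>det (ev_matrix n E dir mk V0 eo)\<bar> =
    absdet (mk ` {..<n} \<times> {0, 1}) (Inl ` {0, 1} \<union> Inr ` E) (Aent E dir V0)"
proof -
  define f where "f = (\<lambda>i. (mk (i div 2), i mod 2))"
  define g where "g = (\<lambda>j. if j < 2 then Inl j else Inr (eo (j - 2)) :: nat + 'a set)"
  have f: "bij_betw f {..<2 * n} (mk ` {..<n} \<times> {0, 1})"
    unfolding bij_betw_def
  proof
    show "inj_on f {..<2 * n}"
    proof (rule inj_onI)
      fix i j assume i: "i \<in> {..<2 * n}" and j: "j \<in> {..<2 * n}" and e: "f i = f j"
      have "i div 2 < n" "j div 2 < n" using i j by auto
      then have "i div 2 = j div 2" using e inj unfolding f_def inj_on_def by auto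
      moreover have "i mod 2 = j mod 2" using e unfolding f_def by auto
      ultimately show "i = j" by (metis div_mod_decomp)
    qed
    show "f ` {..<2 * n} = mk ` {..<n} \<times> {0, 1}"
    proof
      show "f ` {..<2 * n} \<subseteq> mk ` {..<n} \<times> {0, 1}" unfolding f_def by auto
      show "mk ` {..<n} \<times> {0, 1} \<subseteq> f ` {..<2 * n}"
      proof
        fix y assume "y \<in> mk ` {..<n} \<times> {0::nat, 1}"
        then obtain k c where kc: "y = (mk k, c)" "k < n" "c \<in> {0, 1}" by auto
        have "2 * k + c < 2 * n" using kc by auto
        moreover have "f (2 * k + c) = y" using kc unfolding f_def by auto
        ultimately show "y \<in> f ` {..<2 * n}" by force
      qed
    qed
  qed
  have g: "bij_betw g {..<2 * n} (Inl ` {0, 1} \<union> Inr ` E)"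
    unfolding bij_betw_def
  proof
    show "inj_on g {..<2 * n}"
    proof (rule inj_onI)
      fix i j assume i: "i \<in> {..<2 * n}" and j: "j \<in> {..<2 * n}" and e: "g i = g j"
      show "i = j"
      proof (cases "i < 2")
        case True then show ?thesis using e unfolding g_def by (auto split: if_splits)
      next
        case False
        then have "\<not> j < 2" using e unfolding g_def by (auto split: if_splits)
        then have "eo (i - 2) = eo (j - 2)" using e False unfolding g_def by auto
        moreover have "i - 2 < card E" "j - 2 < card E" using i j cE False \<open>\<not> j < 2\<close> by auto
        ultimately have "i - 2 = j - 2" using eo unfolding bij_betw_def inj_on_def by auto
        then show ?thesis using False \<open>\<not> j < 2\<close> by simp
      qed
    qed
    show "g ` {..<2 * n} = Inl ` {0, 1} \<union> Inr ` E"
    proof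
      show "g ` {..<2 * n} \<subseteq> Inl ` {0, 1} \<union> Inr ` E"
      proof
        fix x assume "x \<in> g ` {..<2 * n}"
        then obtain j where j: "j < 2 * n" "x = g j" by auto
        show "x \<in> Inl ` {0, 1} \<union> Inr ` E"
        proof (cases "j < 2")
          case True then show ?thesis using j unfolding g_def by auto
        next
          case False
          then have "j - 2 < card E" using j cE by auto
          then have "eo (j - 2) \<in> E" using eo unfolding bij_betw_def by auto
          then show ?thesis using j False unfolding g_def by auto
        qed
      qed
      show "Inl ` {0, 1} \<union> Inr ` E \<subseteq> g ` {..<2 * n}"
      proof
        fix x assume x: "x \<in> Inl ` {0::nat, 1} \<union> Inr ` E"
        have n1: "n \<ge> 1" using cE by simp
        show "x \<in> g ` {..<2 * n}"
        proof (cases "x \<in> Inl ` {0, 1}")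
          case True
          then obtain j where "j \<in> {0::nat, 1}" "x = Inl j" by auto
          then show ?thesis using n1 unfolding g_def by (intro image_eqI[of _ _ j]) auto
        next
          case False
          then obtain e where e: "e \<in> E" "x = Inr e" using x by auto
          have "e \<in> eo ` {..<card E}" using e eo by (simp add: bij_betw_def)
          then obtain k where k0: "k \<in> {..<card E}" "e = eo k" by (rule imageE)
          then have k: "k < card E" "eo k = e" by auto
          then show ?thesis using e cE unfolding g_def by (intro image_eqI[of _ _ "k + 2"]) auto
        qed
      qed
    qed
  qed
  have "mkmat (2 * n) f g (Aent E dir V0) = ev_matrix n E dir mk V0 eo"
    unfolding mkmat_def ev_matrix_def
    by (rule eq_matI) (auto simp: f_def g_def Aent_def psum_def Let_def)
  then show ?thesis using absdet_eq[OF f g, of "Aent E dir V0"] by simp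
qed

theorem mainTheorem1:
  fixes d n :: nat and r :: "nat \<Rightarrow> nat"
    and Vs :: "'v set" and E :: "'v set set" and dir :: "'v \<Rightarrow> 'v \<Rightarrow> int \<times> int"
    and endv :: "nat \<Rightarrow> 'v" and enddir :: "nat \<Rightarrow> int \<times> int" and mk :: "nat \<Rightarrow> 'v"
    and len :: "'v set \<Rightarrow> real"
  assumes "d \<ge> 1" and "n \<ge> 1"
    and "3 * d - 1 = n + (\<Sum>k<n. r k)"
    and "is_lab_curve d n Vs E dir endv enddir mk len"
    and "inj_on mk {..<n}"
    and "\<forall>k<n. valence d n E endv mk (mk k) = r k + 3"
    and "\<forall>v\<in>Vs. v \<notin> mk ` {..<n} \<longrightarrow> valence d n E endv mk v = 3"
    and "\<not> has_string d n E endv mk"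
  shows "card E = 2 * n - 2 \<and>
    (\<forall>V0\<in>Vs. \<forall>eo. bij_betw eo {..<card E} E \<longrightarrow>
       \<bar>det (ev_matrix n E dir mk V0 eo)\<bar> =
         (\<Prod>v\<in>Vs - mk ` {..<n}. of_int (vertex_mult d E dir endv enddir v)) \<and>
       nu_C d Vs endv enddir * \<bar>det (ev_matrix n E dir mk V0 eo)\<bar> =
         mult_C d n Vs E dir endv enddir mk)"
proof -
  note lab = assms(4) and inj = assms(5) and vu = assms(7) and ns = assms(8)
  have cE: "card E + 2 = 2 * n" by (rule lab_count[OF assms(1-7)])
  have t: "is_tree Vs E" using lab by (simp add: is_lab_curve_def)
  have mV: "\<And>k. k < n \<Longrightarrow> mk k \<in> Vs" using lab by (simp add: is_lab_curve_def)
  have g: "gs Vs E dir (mk ` {..<n})" by (rule lab_gs[OF lab vu ns])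
  have cM: "card (mk ` {..<n}) = n" using card_image[OF inj] by simp
  have main: "\<bar>det (ev_matrix n E dir mk V0 eo)\<bar> =
         (\<Prod>v\<in>Vs - mk ` {..<n}. of_int (vertex_mult d E dir endv enddir v))"
    if V0: "V0 \<in> Vs" and eo: "bij_betw eo {..<card E} E" for V0 eo
  proof -
    have "\<bar>det (ev_matrix n E dir mk V0 eo)\<bar> =
      absdet (mk ` {..<n} \<times> {0, 1}) (Inl ` {0, 1} \<union> Inr ` E) (Aent E dir V0)"
      by (rule ev_absdet[OF t inj mV cE eo])
    also have "\<dots> = (\<Prod>w\<in>Vs - mk ` {..<n}. real_of_int (gm E dir w))"
      by (rule abs_main[OF g _ V0]) (use cE cM in simp)
    also have "\<dots> = (\<Prod>v\<in>Vs - mk ` {..<n}. of_int (vertex_mult d E dir endv enddir v))"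
      by (rule prod.cong) (auto simp: vm_eq[OF lab vu ns])
    finally show ?thesis .
  qed
  have setEq: "{v \<in> Vs. valence d n E endv mk v = 3 \<and> v \<notin> mk ` {..<n}} = Vs - mk ` {..<n}"
    using vu by auto
  show ?thesis
  proof (intro conjI ballI allI impI)
    show "card E = 2 * n - 2" using cE by simp
    fix V0 eo assume V0: "V0 \<in> Vs" and eo: "bij_betw eo {..<card E} E"
    show "\<bar>det (ev_matrix n E dir mk V0 eo)\<bar> =
         (\<Prod>v\<in>Vs - mk ` {..<n}. of_int (vertex_mult d E dir endv enddir v))" by (rule main[OF V0 eo])
    show "nu_C d Vs endv enddir * \<bar>det (ev_matrix n E dir mk V0 eo)\<bar> = mult_C d n Vs E dir endv enddir mk"
      unfolding mult_C_def setEq main[OF V0 eo] ..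
  qed
qed

end
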